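(* (i) $U=u_1u_2u_1+u_1s_2s_1^{-1}s_2u_1+u_1s_2^{-1}s_1s_2^{-1}u_1+u_1\omega+u_1\omega^{-1}+u_1\omega^{-2}$. (ii) $H_4=U$.
   Context: Let $B_3=\langle s_1,s_2\mid s_1s_2s_1=s_2s_1s_2\rangle$, $R_4=\mathbb{Z}[a,b,c,d,d^{-1}]$, and let $H_4$ be the quotient of the group algebra $R_4B_3$ by the relations $s_i^4=as_i^3+bs_i^2+cs_i+d$ for $i=1,2$; identify $s_i$ with their images in $H_4$. For $i=1,2$ let $u_i$ be the $R_4$-subalgebra of $H_4$ generated by $s_i$. Set $\omega=s_2s_1^2s_2$. For $R_4$-submodules (or elements) $X_1,\dots,X_n$ of $H_4$, $X_1\cdots X_n$ denotes the $R_4$-submodule spanned by all products $x_1\cdots x_n$ with $x_j\in X_j$, and sums are sums of submodules. Define $U'=u_1u_2u_1+u_1s_2s_1^{-1}s_2u_1+u_1s_2^{-1}s_1s_2^{-1}u_1+u_1s_2^{-1}s_1^{-2}s_2^{-1}$ and $U=U'+u_1s_2s_1^{-2}s_2u_1+u_1s_2^{-2}s_1^{-2}s_2^{-2}u_1$. *)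

theory Defs
  imports Main
begin

text \<open>An R_4-algebra A (R_4 = Z[a,b,c,d,d^-1]) is the same as a ring A with central
elements a, b, c, d and an inverse e of d.  The image of R_4 in A is the subring
generated by a, b, c, d, e.\<close>

inductive_set scal :: "'a::ring_1 \<Rightarrow> 'a \<Rightarrow> 'a \<Rightarrow> 'a \<Rightarrow> 'a \<Rightarrow> 'a set"
  for a b c d e :: "'a::ring_1" where
  one: "1 \<in> scal a b c d e"
| ga: "a \<in> scal a b c d e"
| gb: "b \<in> scal a b c d e"
| gc: "c \<in> scal a b c d e"
| gd: "d \<in> scal a b c d e"
| ge: "e \<in> scal a b c d e"
| neg: "x \<in> scal a b c d e \<Longrightarrow> - x \<in> scal a b c d e"
| add: "x \<in> scal a b c d e \<Longrightarrow> y \<in> scal a b c d e \<Longrightarrow> x + y \<in> scal a b c d e"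
| mul: "x \<in> scal a b c d e \<Longrightarrow> y \<in> scal a b c d e \<Longrightarrow> x * y \<in> scal a b c d e"

text \<open>R-linear span of a set (scalars are central, so left multiplication suffices).\<close>
definition lspan :: "('a::ring_1) set \<Rightarrow> 'a set \<Rightarrow> 'a set" where
  "lspan R X = {\<Sum>i<n. r i * x i | (n::nat) r x. \<forall>i<n. r i \<in> R \<and> x i \<in> X}"

definition mprod2 :: "('a::ring_1) set \<Rightarrow> 'a set \<Rightarrow> 'a set \<Rightarrow> 'a set" where
  "mprod2 R X Y = lspan R {x * y | x y. x \<in> X \<and> y \<in> Y}"

definition mprod3 :: "('a::ring_1) set \<Rightarrow> 'a set \<Rightarrow> 'a set \<Rightarrow> 'a set \<Rightarrow> 'a set" where
  "mprod3 R X Y Z = lspan R {x * y * z | x y z. x \<in> X \<and> y \<in> Y \<and> z \<in> Z}"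

definition msum :: "('a::plus) set \<Rightarrow> 'a set \<Rightarrow> 'a set" (infixl "\<oplus>\<^sub>m" 65) where
  "X \<oplus>\<^sub>m Y = {x + y | x y. x \<in> X \<and> y \<in> Y}"

definition usub :: "('a::ring_1) set \<Rightarrow> 'a \<Rightarrow> 'a set" where
  "usub R s = lspan R {s ^ n | n. True}"

text \<open>Monoid generated by a set (images of the group elements of B_3).\<close>
inductive_set words :: "('a::monoid_mult) set \<Rightarrow> 'a set" for G where
  one: "1 \<in> words G"
| step: "g \<in> G \<Longrightarrow> w \<in> words G \<Longrightarrow> g * w \<in> words G"

text \<open>The modules U' and U of the paper, for scalar ring R, generators s1 s2 and
their inverses t1 t2 (u_1 = usub R s1, u_2 = usub R s2).\<close>
definition Uprime :: "('a::ring_1) set \<Rightarrow> 'a \<Rightarrow> 'a \<Rightarrow> 'a \<Rightarrow> 'a \<Rightarrow> 'a set" where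
  "Uprime R s1 s2 t1 t2 =
     mprod3 R (usub R s1) (usub R s2) (usub R s1)
     \<oplus>\<^sub>m mprod3 R (usub R s1) {s2 * t1 * s2} (usub R s1)
     \<oplus>\<^sub>m mprod3 R (usub R s1) {t2 * s1 * t2} (usub R s1)
     \<oplus>\<^sub>m mprod2 R (usub R s1) {t2 * t1 ^ 2 * t2}"

definition Ufull :: "('a::ring_1) set \<Rightarrow> 'a \<Rightarrow> 'a \<Rightarrow> 'a \<Rightarrow> 'a \<Rightarrow> 'a set" where
  "Ufull R s1 s2 t1 t2 =
     Uprime R s1 s2 t1 t2
     \<oplus>\<^sub>m mprod3 R (usub R s1) {s2 * t1 ^ 2 * s2} (usub R s1)
     \<oplus>\<^sub>m mprod3 R (usub R s1) {t2 ^ 2 * t1 ^ 2 * t2 ^ 2} (usub R s1)"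

end

theory Submission
  imports Defs
begin

definition submod :: "('a::ring_1) set \<Rightarrow> 'a set \<Rightarrow> bool" where
  "submod R M \<longleftrightarrow> 0 \<in> M \<and> (\<forall>u\<in>M. \<forall>v\<in>M. u + v \<in> M) \<and> (\<forall>r\<in>R. \<forall>u\<in>M. r * u \<in> M)"

lemma lspan_iff: "u \<in> lspan R X \<longleftrightarrow> (\<exists>(n::nat) r x. u = (\<Sum>i<n. r i * x i) \<and> (\<forall>i<n. r i \<in> R \<and> x i \<in> X))"
  unfolding lspan_def by (rule iffI; (erule CollectE)?; (rule CollectI)?; blast)

lemma lspan_zero: "0 \<in> lspan R X"
  unfolding lspan_def by (rule CollectI, rule exI[of _ 0], auto)

lemma lspan_cons:
  assumes "v \<in> lspan R X" "r0 \<in> R" "x0 \<in> X"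
  shows "r0 * x0 + v \<in> lspan R X"
proof -
  obtain n :: nat and r x where v: "v = (\<Sum>i<n. r i * x i)" and h: "\<forall>i<n. r i \<in> R \<and> x i \<in> X"
    using assms(1) unfolding lspan_iff by blast
  have "r0 * x0 + v = (\<Sum>i<Suc n. (r(n:=r0)) i * (x(n:=x0)) i)"
    by (simp add: v add.commute)
  moreover have "\<forall>i<Suc n. (r(n:=r0)) i \<in> R \<and> (x(n:=x0)) i \<in> X"
    using h assms by (auto simp: less_Suc_eq)
  ultimately show ?thesis unfolding lspan_iff by blast
qed

lemma lspan_add:
  assumes "u \<in> lspan R X" "v \<in> lspan R X"
  shows "u + v \<in> lspan R X"
proof -
  obtain n :: nat and r x where u: "u = (\<Sum>i<n. r i * x i)" and h: "\<forall>i<n. r i \<in> R \<and> x i \<in> X"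
    using assms(1) unfolding lspan_iff by blast
  have "\<forall>m\<le>n. (\<Sum>i<m. r i * x i) + v \<in> lspan R X"
  proof (intro allI impI)
    fix m assume "m \<le> n" then show "(\<Sum>i<m. r i * x i) + v \<in> lspan R X"
    proof (induction m)
      case 0 then show ?case using assms(2) by simp
    next
      case (Suc m)
      have "(\<Sum>i<Suc m. r i * x i) + v = r m * x m + ((\<Sum>i<m. r i * x i) + v)"
        by (simp add: add.assoc add.commute add.left_commute)
      then show ?case using Suc h lspan_cons by (metis Suc_le_lessD less_or_eq_imp_le)
    qed
  qed
  then show ?thesis using u by blast
qed

lemma lspan_base: "x0 \<in> X \<Longrightarrow> 1 \<in> R \<Longrightarrow> x0 \<in> lspan R X"
  using lspan_cons[OF lspan_zero, of 1 R x0 X] by simp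

lemma submod_lspan:
  assumes "\<And>r s. r \<in> R \<Longrightarrow> s \<in> R \<Longrightarrow> r * s \<in> R"
  shows "submod R (lspan R X)"
  unfolding submod_def
proof (intro conjI ballI)
  show "0 \<in> lspan R X" by (rule lspan_zero)
next
  fix u v assume "u \<in> lspan R X" "v \<in> lspan R X" then show "u + v \<in> lspan R X" by (rule lspan_add)
next
  fix r u assume r: "r \<in> R" and "u \<in> lspan R X"
  then obtain n :: nat and rr x where u: "u = (\<Sum>i<n. rr i * x i)" and h: "\<forall>i<n. rr i \<in> R \<and> x i \<in> X"
    unfolding lspan_iff by blast
  have "r * u = (\<Sum>i<n. (r * rr i) * x i)" by (simp add: u sum_distrib_left mult.assoc)
  moreover have "\<forall>i<n. r * rr i \<in> R \<and> x i \<in> X" using h r assms by auto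
  ultimately show "r * u \<in> lspan R X" unfolding lspan_iff
    by (intro exI[of _ n] exI[of _ "\<lambda>i. r * rr i"] exI[of _ x]) simp
qed

lemma lspan_sub:
  assumes "submod R M" "X \<subseteq> M" "u \<in> lspan R X"
  shows "u \<in> M"
proof -
  obtain n :: nat and r x where u: "u = (\<Sum>i<n. r i * x i)" and h: "\<forall>i<n. r i \<in> R \<and> x i \<in> X"
    using assms(3) unfolding lspan_iff by blast
  have "\<forall>m\<le>n. (\<Sum>i<m. r i * x i) \<in> M"
  proof (intro allI impI)
    fix m assume "m \<le> n" then show "(\<Sum>i<m. r i * x i) \<in> M"
    proof (induction m)
      case 0 then show ?case using assms(1) by (simp add: submod_def)
    next
      case (Suc m)
      then have "r m \<in> R" "x m \<in> M" using h assms(2) by auto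
      then have "r m * x m \<in> M" using assms(1) by (simp add: submod_def)
      then show ?case using Suc assms(1) by (simp add: submod_def)
    qed
  qed
  then show ?thesis using u by blast
qed

lemma lspan_lin:
  assumes cen: "\<And>r y. r \<in> R \<Longrightarrow> r * y = y * r"
    and M: "submod R M" and gen: "\<And>x. x \<in> X \<Longrightarrow> L * x * Q \<in> M" and u: "u \<in> lspan R X"
  shows "L * u * Q \<in> M"
proof -
  obtain n :: nat and r x where u: "u = (\<Sum>i<n. r i * x i)" and h: "\<forall>i<n. r i \<in> R \<and> x i \<in> X"
    using u unfolding lspan_iff by blast
  have eq: "L * u * Q = (\<Sum>i<n. r i * (L * x i * Q))"
    unfolding u sum_distrib_left sum_distrib_right
    by (rule sum.cong, simp) (metis cen h lessThan_iff mult.assoc)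
  have "\<forall>m\<le>n. (\<Sum>i<m. r i * (L * x i * Q)) \<in> M"
  proof (intro allI impI)
    fix m assume "m \<le> n" then show "(\<Sum>i<m. r i * (L * x i * Q)) \<in> M"
    proof (induction m)
      case 0 then show ?case using M by (simp add: submod_def)
    next
      case (Suc m)
      then have "r m \<in> R" "L * x m * Q \<in> M" using h gen by auto
      then have "r m * (L * x m * Q) \<in> M" using M by (simp add: submod_def)
      then show ?case using Suc M by (simp add: submod_def)
    qed
  qed
  then show ?thesis using eq by simp
qed

lemma msum_I: "u \<in> A \<Longrightarrow> v \<in> B \<Longrightarrow> u + v \<in> A \<oplus>\<^sub>m B"
  unfolding msum_def by blast

lemma msum_E: "w \<in> A \<oplus>\<^sub>m B \<Longrightarrow> (\<And>u v. w = u + v \<Longrightarrow> u \<in> A \<Longrightarrow> v \<in> B \<Longrightarrow> P) \<Longrightarrow> P"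
  unfolding msum_def by blast

lemma msum_lin:
  assumes M: "submod R M" and add: "\<And>u v. f (u + v) = f u + f v"
    and A: "\<And>u. u \<in> A \<Longrightarrow> f u \<in> M" and B: "\<And>u. u \<in> B \<Longrightarrow> f u \<in> M"
    and w: "w \<in> A \<oplus>\<^sub>m B"
  shows "f w \<in> M"
proof -
  obtain u v where "w = u + v" "u \<in> A" "v \<in> B" using w by (rule msum_E)
  then show ?thesis using A B M add unfolding submod_def by simp
qed

lemma submod_msum:
  assumes A: "submod R A" and B: "submod R B"
  shows "submod R (A \<oplus>\<^sub>m B)"
  unfolding submod_def
proof (intro conjI ballI)
  have "0 + 0 \<in> A \<oplus>\<^sub>m B" by (rule msum_I) (use A B in \<open>simp_all add: submod_def\<close>)
  then show "0 \<in> A \<oplus>\<^sub>m B" by simp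
next
  fix u v assume "u \<in> A \<oplus>\<^sub>m B" "v \<in> A \<oplus>\<^sub>m B"
  then obtain u1 u2 v1 v2 where e: "u = u1 + u2" "v = v1 + v2" and m: "u1 \<in> A" "v1 \<in> A" "u2 \<in> B" "v2 \<in> B"
    by (metis msum_E)
  have "(u1 + v1) + (u2 + v2) \<in> A \<oplus>\<^sub>m B"
    by (rule msum_I) (use A B m in \<open>simp_all add: submod_def\<close>)
  moreover have "u + v = (u1 + v1) + (u2 + v2)" using e by (simp add: algebra_simps)
  ultimately show "u + v \<in> A \<oplus>\<^sub>m B" by metis
next
  fix r u assume r: "r \<in> R" and "u \<in> A \<oplus>\<^sub>m B"
  then obtain u1 u2 where e: "u = u1 + u2" and m: "u1 \<in> A" "u2 \<in> B"
    by (metis msum_E)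
  have "r * u1 + r * u2 \<in> A \<oplus>\<^sub>m B"
    by (rule msum_I) (use A B m r in \<open>simp_all add: submod_def\<close>)
  then show "r * u \<in> A \<oplus>\<^sub>m B" using e by (simp add: distrib_left)
qed

lemma msum_left: "submod R B \<Longrightarrow> u \<in> A \<Longrightarrow> u \<in> A \<oplus>\<^sub>m B"
  using msum_I[of u A 0 B] unfolding submod_def by simp
lemma msum_right: "submod R A \<Longrightarrow> u \<in> B \<Longrightarrow> u \<in> A \<oplus>\<^sub>m B"
  using msum_I[of 0 A u B] unfolding submod_def by simp



datatype lt = LA | LB | LC

fun step :: "int \<times> lt list \<Rightarrow> lt \<Rightarrow> int \<times> lt list" where
  "step (k, []) l = (k, [l])"
| "step (k, LA # r) l = (case l of LA \<Rightarrow> (k + 1, r) | _ \<Rightarrow> (k, l # LA # r))"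
| "step (k, LB # r) l = (case l of LA \<Rightarrow> (k, LA # LB # r) | LB \<Rightarrow> (k, LC # r) | LC \<Rightarrow> (k + 1, r))"
| "step (k, LC # r) l = (case l of LA \<Rightarrow> (k, LA # LC # r) | LB \<Rightarrow> (k + 1, r) | LC \<Rightarrow> (k + 1, LB # r))"

definition mulnf :: "int \<times> lt list \<Rightarrow> int \<times> lt list \<Rightarrow> int \<times> lt list" where
  "mulnf g h = (let r = foldl step g (rev (snd h)) in (fst r + fst h, snd r))"

fun npwn :: "int \<times> lt list \<Rightarrow> nat \<Rightarrow> int \<times> lt list" where
  "npwn c 0 = (0, [])"
| "npwn c (Suc n) = mulnf (npwn c n) c"

definition npw :: "int \<times> lt list \<Rightarrow> int \<times> lt list \<Rightarrow> int \<Rightarrow> int \<times> lt list" where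
  "npw c ci n = (if 0 \<le> n then npwn c (nat n) else npwn ci (nat (- n)))"

definition zpw :: "'a::ring_1 \<Rightarrow> 'a \<Rightarrow> int \<Rightarrow> 'a" where
  "zpw q qi n = (if 0 \<le> n then q ^ nat n else qi ^ nat (- n))"

lemma zpw_succ:
  assumes "q * qi = 1" "qi * q = 1"
  shows "zpw q qi (n + 1) = zpw q qi n * q"
proof (cases "0 \<le> n")
  case True
  then have "nat (n + 1) = Suc (nat n)" by simp
  then show ?thesis using True by (simp add: zpw_def power_Suc2 del: power_Suc)
next
  case False
  then obtain m where m: "nat (- n) = Suc m" by (metis gr0_implies_Suc zero_less_nat_eq neg_0_less_iff_less not_le)
  show ?thesis
  proof (cases "n = -1")
    case True then show ?thesis using assms by (simp add: zpw_def)
  next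
    case F2: False
    then have "nat (- (n + 1)) = m" using m False by simp
    moreover have "\<not> 0 \<le> n + 1" using False F2 by simp
    ultimately have "zpw q qi n * q = qi ^ m * qi * q" "zpw q qi (n + 1) = qi ^ m"
      using False m by (simp_all add: zpw_def power_Suc2 del: power_Suc)
    then show ?thesis using assms by (simp add: mult.assoc)
  qed
qed

lemma zpw_zero[simp]: "zpw q qi 0 = 1" by (simp add: zpw_def)

lemma zpw_pred:
  assumes "q * qi = 1" "qi * q = 1"
  shows "zpw q qi (n - 1) = zpw q qi n * qi"
proof -
  have "zpw q qi n * qi = zpw q qi (n - 1) * q * qi" using zpw_succ[OF assms, of "n - 1"] by simp
  also have "\<dots> = zpw q qi (n - 1)" using assms by (simp add: mult.assoc)
  finally show ?thesis by simp
qed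

lemma zpw_add:
  assumes "q * qi = 1" "qi * q = 1"
  shows "zpw q qi (m + n) = zpw q qi m * zpw q qi n"
proof (induction n rule: int_induct[where k=0])
  case base then show ?case by simp
next
  case (step1 i)
  have "zpw q qi (m + (i + 1)) = zpw q qi (m + i) * q" using zpw_succ[OF assms, of "m+i"] by (simp add: add.assoc)
  then show ?case using step1 zpw_succ[OF assms, of i] by (simp add: mult.assoc)
next
  case (step2 i)
  have "zpw q qi (m + (i - 1)) = zpw q qi (m + i) * qi" using zpw_pred[OF assms, of "m+i"] by (simp add: algebra_simps)
  then show ?case using step2 zpw_pred[OF assms, of i] by (simp add: mult.assoc)
qed

lemma zpw_comm:
  assumes "x * q = q * x" "x * qi = qi * x"
  shows "x * zpw q qi n = zpw q qi n * x"
proof -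
  have p: "x * y ^ k = y ^ k * x" if "x * y = y * x" for y and k :: nat
    using that by (induction k) (simp_all add: mult.assoc[symmetric] power_Suc2, metis mult.assoc)
  show ?thesis using p assms by (simp add: zpw_def)
qed



datatype gl = Gx | GX | Gy | GY

definition "xnf = ((-1::int), [LA, LC])"
definition "Xnf = ((-1::int), [LB, LA])"
definition "ynf = ((-1::int), [LC, LA])"
definition "Ynf = ((-1::int), [LA, LB])"

fun gnf :: "gl \<Rightarrow> int \<times> lt list" where
  "gnf Gx = xnf" | "gnf GX = Xnf" | "gnf Gy = ynf" | "gnf GY = Ynf"

fun wnf :: "gl list \<Rightarrow> int \<times> lt list" where
  "wnf [] = (0, [])" | "wnf (g # w) = mulnf (gnf g) (wnf w)"

locale H4 =
  fixes a b c d e s1 s2 t1 t2 :: "'a::ring_1"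
  assumes ca: "\<And>x. a * x = x * a" and cb: "\<And>x. b * x = x * b"
    and cc: "\<And>x. c * x = x * c" and cd: "\<And>x. d * x = x * d"
    and de: "d * e = 1" and ed: "e * d = 1"
    and i1: "s1 * t1 = 1" and i1': "t1 * s1 = 1"
    and i2: "s2 * t2 = 1" and i2': "t2 * s2 = 1"
    and braid: "s1 * s2 * s1 = s2 * s1 * s2"
    and q1: "s1 ^ 4 = a * s1 ^ 3 + b * s1 ^ 2 + c * s1 + d"
    and q2: "s2 ^ 4 = a * s2 ^ 3 + b * s2 ^ 2 + c * s2 + d"
begin

abbreviation "R \<equiv> scal a b c d e"

lemma ce: "e * x = x * e"
proof -
  have "e * x = e * x * (d * e)" using de by simp
  also have "\<dots> = e * (x * d) * e" by (simp add: mult.assoc)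
  also have "\<dots> = e * (d * x) * e" using cd by simp
  also have "\<dots> = (e * d) * x * e" by (simp add: mult.assoc)
  finally show ?thesis using ed by simp
qed

lemma scal_central: "r \<in> R \<Longrightarrow> r * x = x * r"
proof (induction r arbitrary: x rule: scal.induct)
  case (neg y) then show ?case by simp
next
  case (add y z) then show ?case by (simp add: distrib_left distrib_right)
next
  case (mul y z) then show ?case by (metis mult.assoc)
qed (use ca cb cc cd ce in auto)

lemma scal_mid: "r \<in> R \<Longrightarrow> X * (r * Y) = r * (X * Y)"
  by (metis mult.assoc scal_central)

lemma scal_mul: "r \<in> R \<Longrightarrow> s \<in> R \<Longrightarrow> r * s \<in> R" by (rule scal.mul)

lemma submod_ls: "submod R (lspan R X)"
  by (rule submod_lspan) (rule scal.mul)

lemma scal_neg: "r \<in> R \<Longrightarrow> - r \<in> R" by (rule scal.neg)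

lemmas scal_gens = scal.ga scal.gb scal.gc scal.gd scal.ge scal.one

definition "A = s1 * s2 * s1"
definition "Bv = s1 * s2"
definition "Ai = t1 * t2 * t1"
definition "z = A * A"
definition "zi = Ai * Ai"

lemma canc: "s1 * (t1 * x) = x" "t1 * (s1 * x) = x" "s2 * (t2 * x) = x" "t2 * (s2 * x) = x"
  by (simp_all add: mult.assoc[symmetric] i1 i1' i2 i2')

lemmas gsimp = mult.assoc canc i1 i1' i2 i2'

lemma A_Ai: "A * Ai = 1" unfolding A_def Ai_def by (simp add: gsimp)
lemma Ai_A: "Ai * A = 1" unfolding A_def Ai_def by (simp add: gsimp)
lemma A_canc: "A * (Ai * x) = x" "Ai * (A * x) = x"
  by (simp_all add: mult.assoc[symmetric] A_Ai Ai_A)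
lemma z_zi: "z * zi = 1" unfolding z_def zi_def by (simp add: mult.assoc A_canc A_Ai)
lemma zi_z: "zi * z = 1" unfolding z_def zi_def by (simp add: mult.assoc A_canc Ai_A)

lemma A_alt: "A = s2 * s1 * s2" unfolding A_def using braid .

lemma A_s1: "A * s1 = s2 * A"
proof -
  have "s2 * A = (s2 * s1 * s2) * s1" by (simp add: A_def mult.assoc)
  also have "\<dots> = (s1 * s2 * s1) * s1" using braid by simp
  finally show ?thesis by (simp add: A_def)
qed

lemma A_s2: "A * s2 = s1 * A"
proof -
  have "A * s2 = (s1 * s2 * s1) * s2" by (simp add: A_def)
  also have "\<dots> = s1 * (s2 * s1 * s2)" by (simp add: mult.assoc)
  also have "\<dots> = s1 * A" using braid by (simp add: A_def)
  finally show ?thesis .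
qed

lemma z_s1: "z * s1 = s1 * z"
  unfolding z_def by (metis A_s1 A_s2 mult.assoc)
lemma z_s2: "z * s2 = s2 * z"
  unfolding z_def by (metis A_s1 A_s2 mult.assoc)

lemma zi_comm: "x * z = z * x \<Longrightarrow> x * zi = zi * x"
proof -
  assume h: "x * z = z * x"
  have "x * zi = zi * z * x * zi" using zi_z by simp
  also have "\<dots> = zi * (x * z) * zi" using h by (simp add: mult.assoc)
  also have "\<dots> = zi * x" using z_zi by (simp add: mult.assoc)
  finally show ?thesis .
qed

lemma z_A: "z * A = A * z" unfolding z_def by (simp add: mult.assoc)
lemma z_Bv: "z * Bv = Bv * z" unfolding Bv_def by (metis z_s1 z_s2 mult.assoc)

lemma Bv3: "Bv * (Bv * Bv) = z"
proof -
  have "Bv * (Bv * Bv) = (s1 * s2 * s1) * (s2 * s1 * s2)" by (simp add: Bv_def mult.assoc)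
  then show ?thesis using braid by (simp add: z_def A_def)
qed

fun lv :: "lt \<Rightarrow> 'a" where
  "lv LA = A" | "lv LB = Bv" | "lv LC = Bv * Bv"

definition lprod :: "lt list \<Rightarrow> 'a" where
  "lprod ls = foldr (\<lambda>l r. lv l * r) ls 1"

lemma lprod_simps[simp]: "lprod [] = 1" "lprod (l # ls) = lv l * lprod ls"
  by (simp_all add: lprod_def)

lemma lprod_append: "lprod (xs @ ys) = lprod xs * lprod ys"
  by (induction xs) (simp_all add: mult.assoc)

lemma lv_z: "lv l * z = z * lv l"
  by (cases l) (simp_all add: z_A z_Bv, metis z_Bv mult.assoc)

lemma lprod_z: "lprod ls * z = z * lprod ls"
  by (induction ls) (simp_all, metis lv_z mult.assoc)

lemma zpwz_comm: "x * z = z * x \<Longrightarrow> x * zpw z zi k = zpw z zi k * x"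
  by (rule zpw_comm) (simp_all add: zi_comm)

definition ev :: "int \<times> lt list \<Rightarrow> 'a" where
  "ev g = zpw z zi (fst g) * lprod (rev (snd g))"

lemma zsucc: "zpw z zi (k + 1) = zpw z zi k * z" by (rule zpw_succ[OF z_zi zi_z])

lemma ev_step: "ev (step g l) = ev g * lv l"
proof -
  obtain k w where g: "g = (k, w)" by fastforce
  have P: "lprod (rev w) * z = z * lprod (rev w)" by (rule lprod_z)
  show ?thesis
  proof (cases w)
    case Nil then show ?thesis by (cases l) (simp_all add: g ev_def)
  next
    case (Cons h r)
    have P: "lprod (rev r) * z = z * lprod (rev r)" by (rule lprod_z)
    have e1: "ev (k, h # r) = zpw z zi k * lprod (rev r) * lv h"
      by (simp add: ev_def lprod_append mult.assoc)
    have e2: "ev (k + 1, r) = zpw z zi k * lprod (rev r) * z"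
      by (simp add: ev_def zsucc mult.assoc P)
    have e3: "\<And>l2. ev (k, l2 # r) = zpw z zi k * lprod (rev r) * lv l2"
      by (simp add: ev_def lprod_append mult.assoc)
    have e4: "\<And>l2 l3. ev (k, l2 # l3 # r) = zpw z zi k * lprod (rev r) * lv l3 * lv l2"
      by (simp add: ev_def lprod_append mult.assoc)
    have e5: "ev (k + 1, LB # r) = zpw z zi k * lprod (rev r) * z * Bv"
      by (simp add: ev_def zsucc lprod_append mult.assoc) (simp add: mult.assoc[symmetric] P)
    have AA: "A * A = z" by (simp add: z_def)
    have B3: "Bv * Bv * Bv = z" "Bv * (Bv * Bv) = z" using Bv3 by (simp_all add: mult.assoc)
    have B4: "Bv * Bv * (Bv * Bv) = z * Bv" using Bv3 by (simp add: mult.assoc[symmetric])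
    show ?thesis using Cons
      apply (cases h; cases l)
      apply (simp_all add: g e1 e2 e3 e4 e5 mult.assoc AA B3 B4 z_Bv)
      done
  qed
qed

lemma ev_foldl: "ev (foldl step g ls) = ev g * lprod ls"
  by (induction ls arbitrary: g) (simp_all add: ev_step mult.assoc)

lemma ev_mulnf: "ev (mulnf g h) = ev g * ev h"
proof -
  obtain r where r: "r = foldl step g (rev (snd h))" by simp
  have ez: "ev x * z = z * ev x" for x
  proof -
    have c1: "z * zpw z zi (fst x) = zpw z zi (fst x) * z" by (rule zpwz_comm) simp
    have "ev x * z = zpw z zi (fst x) * (lprod (rev (snd x)) * z)" by (simp add: ev_def mult.assoc)
    also have "\<dots> = (zpw z zi (fst x) * z) * lprod (rev (snd x))" by (simp add: lprod_z mult.assoc)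
    also have "\<dots> = z * ev x" by (simp add: c1[symmetric] ev_def mult.assoc)
    finally show ?thesis .
  qed
  have "ev (mulnf g h) = zpw z zi (fst r + fst h) * lprod (rev (snd r))"
    by (simp add: mulnf_def r[symmetric] ev_def Let_def)
  also have "\<dots> = zpw z zi (fst h) * ev r"
    by (simp add: ev_def zpw_add[OF z_zi zi_z] add.commute mult.assoc)
  also have "\<dots> = zpw z zi (fst h) * (ev g * lprod (rev (snd h)))"
    by (simp add: r ev_foldl)
  also have "\<dots> = ev g * (zpw z zi (fst h) * lprod (rev (snd h)))"
    using zpwz_comm[OF ez, of g "fst h"] by (simp add: mult.assoc[symmetric])
  also have "\<dots> = ev g * ev h" by (simp add: ev_def)
  finally show ?thesis .
qed

lemma zpw_m1: "zpw q qi (-1) = qi" by (simp add: zpw_def)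

lemma ev_xnf: "ev xnf = s1"
proof -
  have "Bv * Bv * A = (s1 * s2 * s1) * (s2 * s1 * s2) * s1" by (simp add: Bv_def A_def mult.assoc)
  also have "\<dots> = z * s1" using braid by (simp add: z_def A_def)
  finally have h: "Bv * (Bv * A) = z * s1" by (simp add: mult.assoc)
  have "ev xnf = zi * (Bv * (Bv * A))" by (simp add: ev_def xnf_def zpw_m1 mult.assoc)
  also have "\<dots> = s1" using h zi_z by (simp add: mult.assoc[symmetric])
  finally show ?thesis .
qed

lemma ev_ynf: "ev ynf = s2"
proof -
  have "A * Bv * Bv = A * ((s1 * s2 * s1) * s2)" by (simp add: Bv_def A_def mult.assoc)
  also have "\<dots> = z * s2" by (simp add: z_def A_def mult.assoc)
  finally have h: "A * (Bv * Bv) = z * s2" by (simp add: mult.assoc)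
  have "ev ynf = zi * (A * (Bv * Bv))" by (simp add: ev_def ynf_def zpw_m1 mult.assoc)
  also have "\<dots> = s2" using h zi_z by (simp add: mult.assoc[symmetric])
  finally show ?thesis .
qed

lemma ev_Xnf: "ev Xnf = t1"
proof -
  have "A * Bv = A * Bv * (s1 * t1)" using i1 by simp
  also have "\<dots> = A * (s1 * s2 * s1) * t1" by (simp add: Bv_def mult.assoc)
  also have "\<dots> = z * t1" by (simp add: z_def A_def)
  finally have h: "A * Bv = z * t1" .
  have "ev Xnf = zi * (A * Bv)" by (simp add: ev_def Xnf_def zpw_m1 mult.assoc)
  also have "\<dots> = t1" using h zi_z by (simp add: mult.assoc[symmetric])
  finally show ?thesis .
qed

lemma ev_Ynf: "ev Ynf = t2"
proof -
  have "Bv * A = Bv * A * (s2 * t2)" using i2 by simp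
  also have "\<dots> = (s1 * s2 * s1) * (s2 * s1 * s2) * t2" by (simp add: Bv_def A_def mult.assoc)
  also have "\<dots> = z * t2" using braid by (simp add: z_def A_def)
  finally have h: "Bv * A = z * t2" .
  have "ev Ynf = zi * (Bv * A)" by (simp add: ev_def Ynf_def zpw_m1 mult.assoc)
  also have "\<dots> = t2" using h zi_z by (simp add: mult.assoc[symmetric])
  finally show ?thesis .
qed

lemma ev_one: "ev (0, []) = 1" by (simp add: ev_def)

fun gv :: "gl \<Rightarrow> 'a" where
  "gv Gx = s1" | "gv GX = t1" | "gv Gy = s2" | "gv GY = t2"

fun wv :: "gl list \<Rightarrow> 'a" where
  "wv [] = 1" | "wv (g # w) = gv g * wv w"

lemma ev_gnf: "ev (gnf g) = gv g"
  by (cases g) (simp_all add: ev_xnf ev_Xnf ev_ynf ev_Ynf)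

lemma ev_wnf: "ev (wnf w) = wv w"
  by (induction w) (simp_all add: ev_one ev_mulnf ev_gnf)

lemma ev_npwn: "ev (npwn cn k) = ev cn ^ k"
  by (induction k) (simp_all add: ev_one ev_mulnf power_Suc2 del: power_Suc)

lemma ev_npw: "ev (npw cn cin k) = zpw (ev cn) (ev cin) k"
  by (simp add: npw_def zpw_def ev_npwn)

lemma lin: "submod R M \<Longrightarrow> (\<And>x. x \<in> X \<Longrightarrow> L * x * Q \<in> M) \<Longrightarrow> u \<in> lspan R X \<Longrightarrow> L * u * Q \<in> M"
  by (rule lspan_lin[of R]) (auto intro: scal_central)

lemma sm_add: "submod R M \<Longrightarrow> u \<in> M \<Longrightarrow> v \<in> M \<Longrightarrow> u + v \<in> M" by (simp add: submod_def)
lemma sm_smul: "submod R M \<Longrightarrow> r \<in> R \<Longrightarrow> u \<in> M \<Longrightarrow> r * u \<in> M" by (simp add: submod_def)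
lemma sm_zero: "submod R M \<Longrightarrow> 0 \<in> M" by (simp add: submod_def)
lemma sm_neg: "submod R M \<Longrightarrow> u \<in> M \<Longrightarrow> - u \<in> M"
proof -
  assume h: "submod R M" "u \<in> M"
  have "-1 \<in> R" by (rule scal.neg[OF scal.one])
  then show ?thesis using sm_smul[OF h(1) _ h(2), of "-1"] by simp
qed
lemma sm_diff: "submod R M \<Longrightarrow> u \<in> M \<Longrightarrow> v \<in> M \<Longrightarrow> u - v \<in> M"
  using sm_add[of M u "- v"] sm_neg by simp

lemma usub_sm: "submod R (usub R s)" unfolding usub_def by (rule submod_ls)

lemma usub_pow: "s ^ n \<in> usub R s"
  unfolding usub_def by (rule lspan_base) (auto intro: scal.one)

lemma usub_mult: assumes "u \<in> usub R s" "v \<in> usub R s" shows "u * v \<in> usub R s"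
proof -
  have st: "s ^ n * w \<in> usub R s" if "w \<in> usub R s" for n w
  proof -
    have "s ^ n * w * 1 \<in> usub R s"
      by (rule lin[OF usub_sm, of "{s ^ m |m. True}"]) (use that usub_pow[of s] in \<open>auto simp: usub_def power_add[symmetric]\<close>)
    then show ?thesis by simp
  qed
  have "1 * u * v \<in> usub R s"
    by (rule lin[OF usub_sm, of "{s ^ m |m. True}"]) (use assms st in \<open>auto simp: usub_def\<close>)
  then show ?thesis by simp
qed

lemma usub_inv:
  assumes qq: "q ^ 4 = a * q ^ 3 + b * q ^ 2 + c * q + d" and qi: "q * qi = 1" "qi * q = 1"
  shows "qi \<in> usub R q"
proof -
  define T where "T = e * q ^ 3 + (- (e * a)) * q ^ 2 + (- (e * b)) * q ^ 1 + (- (e * c)) * q ^ 0"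
  have sc: "e \<in> R" "- (e * a) \<in> R" "- (e * b) \<in> R" "- (e * c) \<in> R"
    by (auto intro!: scal.intros)
  have "T \<in> usub R q" unfolding T_def
    by (intro sm_add[OF usub_sm] sm_smul[OF usub_sm] usub_pow sc)
  moreover have "q * T = 1"
  proof -
    have p: "q * q ^ 3 = q ^ 4" "q * q ^ 2 = q ^ 3" "q * q ^ 1 = q ^ 2" "q * q ^ 0 = q"
      by (simp_all add: power4_eq_xxxx power3_eq_cube power2_eq_square mult.assoc)
    have "q * T = q * (e * q ^ 3) + q * ((- (e * a)) * q ^ 2) + q * ((- (e * b)) * q ^ 1) + q * ((- (e * c)) * q ^ 0)"
      by (simp only: T_def distrib_left)
    also have "\<dots> = e * q ^ 4 + (- (e * a)) * q ^ 3 + (- (e * b)) * q ^ 2 + (- (e * c)) * q"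
      by (simp only: scal_mid[OF sc(1)] scal_mid[OF sc(2)] scal_mid[OF sc(3)] scal_mid[OF sc(4)] p)
    also have "\<dots> = e * (q ^ 4 - a * q ^ 3 - b * q ^ 2 - c * q)"
      by (simp add: algebra_simps)
    also have "\<dots> = e * d" by (simp add: qq)
    finally show ?thesis using ed by simp
  qed
  moreover have "qi = T"
  proof -
    have "qi = qi * (q * T)" using \<open>q * T = 1\<close> by simp
    also have "\<dots> = T" using qi by (simp add: mult.assoc[symmetric])
    finally show ?thesis .
  qed
  ultimately show ?thesis by simp
qed

lemma usub_zpw:
  assumes qq: "q ^ 4 = a * q ^ 3 + b * q ^ 2 + c * q + d" and qi: "q * qi = 1" "qi * q = 1"
  shows "zpw q qi k \<in> usub R q"
proof -
  have "qi ^ n \<in> usub R q" for n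
    using usub_pow[of q 0] usub_pow[of q 1] by (induction n) (simp_all add: usub_mult usub_inv[OF assms])
  then show ?thesis by (simp add: zpw_def usub_pow)
qed

end

context H4 begin

lemma sandw: assumes r: "r \<in> R" shows "P * (Z * (r * Y)) * Q = r * (P * (Z * Y) * Q)"
proof -
  have "P * (Z * (r * Y)) * Q = P * (r * (Z * Y)) * Q" by (simp only: scal_mid[OF r])
  also have "\<dots> = (r * (P * (Z * Y))) * Q" by (simp only: scal_mid[OF r])
  finally show ?thesis by (simp only: mult.assoc)
qed

lemma window:
  assumes M: "submod R M" and qq: "q ^ 4 = a * q ^ 3 + b * q ^ 2 + c * q + d"
    and qi: "q * qi = 1" "qi * q = 1"
    and W0: "P * zpw q qi t * Q \<in> M" and W1: "P * zpw q qi (t + 1) * Q \<in> M"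
    and W2: "P * zpw q qi (t + 2) * Q \<in> M" and W3: "P * zpw q qi (t + 3) * Q \<in> M"
  shows "P * zpw q qi n * Q \<in> M"
proof -
  define f where "f m = P * zpw q qi m * Q" for m
  have zk: "zpw q qi (m + int k) = zpw q qi m * q ^ k" for m k
    using zpw_add[OF qi, of m "int k"] by (simp add: zpw_def)
  have sc: "a \<in> R" "b \<in> R" "c \<in> R" "d \<in> R" "e \<in> R" by (rule scal.intros)+
  have rec: "f (m + 4) = a * f (m + 3) + b * f (m + 2) + c * f (m + 1) + d * f m" for m
  proof -
    have "f (m + 4) = P * (zpw q qi m * q ^ 4) * Q" using zk[of m 4] by (simp add: f_def)
    also have "\<dots> = P * (zpw q qi m * (a * q ^ 3)) * Q + P * (zpw q qi m * (b * q ^ 2)) * Q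
        + P * (zpw q qi m * (c * q ^ 1)) * Q + P * (zpw q qi m * (d * q ^ 0)) * Q"
      by (simp add: qq distrib_left distrib_right)
    also have "\<dots> = a * (P * (zpw q qi m * q ^ 3) * Q) + b * (P * (zpw q qi m * q ^ 2) * Q)
        + c * (P * (zpw q qi m * q ^ 1) * Q) + d * (P * (zpw q qi m * q ^ 0) * Q)"
      by (simp only: sandw[OF sc(1)] sandw[OF sc(2)] sandw[OF sc(3)] sandw[OF sc(4)])
    also have "\<dots> = a * f (m + 3) + b * f (m + 2) + c * f (m + 1) + d * f m"
      using zk[of m 3] zk[of m 2] zk[of m 1] by (simp add: f_def mult.assoc)
    finally show ?thesis .
  qed
  have ne: "- a \<in> R" "- b \<in> R" "- c \<in> R" using sc by (auto intro: scal.neg)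
  have rec2: "f m = e * (1 * f (m + 4) + (- a) * f (m + 3) + (- b) * f (m + 2) + (- c) * f (m + 1))" for m
  proof -
    have "1 * f (m + 4) + (- a) * f (m + 3) + (- b) * f (m + 2) + (- c) * f (m + 1) = d * f m"
      by (simp add: rec)
    then have "e * (1 * f (m + 4) + (- a) * f (m + 3) + (- b) * f (m + 2) + (- c) * f (m + 1)) = e * d * f m"
      by (simp add: mult.assoc)
    then show ?thesis using ed by simp
  qed
  have cl: "x1 \<in> M \<Longrightarrow> x2 \<in> M \<Longrightarrow> x3 \<in> M \<Longrightarrow> x4 \<in> M \<Longrightarrow> r1 \<in> R \<Longrightarrow> r2 \<in> R \<Longrightarrow> r3 \<in> R \<Longrightarrow> r4 \<in> R
     \<Longrightarrow> r1 * x1 + r2 * x2 + r3 * x3 + r4 * x4 \<in> M" for x1 x2 x3 x4 r1 r2 r3 r4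
    by (intro sm_add[OF M] sm_smul[OF M])
  have up: "f (t + int j) \<in> M \<and> f (t + int j + 1) \<in> M \<and> f (t + int j + 2) \<in> M \<and> f (t + int j + 3) \<in> M" for j
  proof (induction j)
    case 0 then show ?case using W0 W1 W2 W3 by (simp add: f_def)
  next
    case (Suc j)
    have e1: "t + int (Suc j) = t + int j + 1" "t + int (Suc j) + 1 = t + int j + 2"
      "t + int (Suc j) + 2 = t + int j + 3" "t + int (Suc j) + 3 = t + int j + 4" by simp_all
    have "f (t + int j + 4) \<in> M" unfolding rec using Suc sc
      by (intro cl) simp_all
    then show ?case using Suc e1 by metis
  qed
  have down: "f (t - int j) \<in> M \<and> f (t - int j + 1) \<in> M \<and> f (t - int j + 2) \<in> M \<and> f (t - int j + 3) \<in> M" for j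
  proof (induction j)
    case 0 then show ?case using W0 W1 W2 W3 by (simp add: f_def)
  next
    case (Suc j)
    have e1: "t - int (Suc j) + 4 = t - int j + 3" "t - int (Suc j) + 3 = t - int j + 2"
      "t - int (Suc j) + 2 = t - int j + 1" "t - int (Suc j) + 1 = t - int j" by simp_all
    have "f (t - int (Suc j)) \<in> M" unfolding rec2[of "t - int (Suc j)"] e1
      using Suc sc ne scal.one by (intro sm_smul[OF M] cl) simp_all
    then show ?case using Suc e1 by metis
  qed
  show ?thesis
  proof (cases "t \<le> n")
    case True
    then have "n = t + int (nat (n - t))" by simp
    then show ?thesis using up[of "nat (n - t)"] by (simp add: f_def)
  next
    case False
    then have "n = t - int (nat (t - n))" by simp
    then show ?thesis using down[of "nat (t - n)"] by (simp add: f_def)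
  qed
qed

definition bimod :: "'a set \<Rightarrow> bool" where
  "bimod M \<longleftrightarrow> (\<forall>m\<in>M. s1 * m \<in> M \<and> t1 * m \<in> M \<and> m * s1 \<in> M \<and> m * t1 \<in> M)"

lemma bimod_zpw:
  assumes B: "bimod M" and m: "m \<in> M"
  shows "zpw s1 t1 i * m * zpw s1 t1 k \<in> M"
proof -
  have L: "s1 ^ n * x \<in> M \<and> t1 ^ n * x \<in> M" if "x \<in> M" for n x
    using that B by (induction n) (simp_all add: bimod_def mult.assoc)
  have Rt: "x * s1 ^ n \<in> M \<and> x * t1 ^ n \<in> M" if "x \<in> M" for n x
    using that B by (induction n) (simp_all add: bimod_def mult.assoc[symmetric] power_Suc2 del: power_Suc)
  have "zpw s1 t1 i * m \<in> M" using L[OF m] by (simp add: zpw_def)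
  then show ?thesis using Rt by (simp add: zpw_def)
qed

lemma dc_nf:
  assumes B: "bimod M" and m: "ev g \<in> M"
  shows "ev (mulnf (mulnf (npw xnf Xnf i) g) (npw xnf Xnf k)) \<in> M"
  using bimod_zpw[OF B m, of i k] by (simp add: ev_mulnf ev_npw ev_xnf ev_Xnf)

lemma quart_conj:
  assumes p: "pi * p = 1" "p * pi = 1"
  shows "(pi * s1 * p) ^ 4 = a * (pi * s1 * p) ^ 3 + b * (pi * s1 * p) ^ 2 + c * (pi * s1 * p) + d"
proof -
  have pw: "(pi * s1 * p) ^ k = pi * s1 ^ k * p" for k
  proof (induction k)
    case 0 then show ?case using p by simp
  next
    case (Suc k)
    have "(pi * s1 * p) ^ Suc k = (pi * s1 ^ k * p) * (pi * s1 * p)" by (simp only: power_Suc2 Suc.IH)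
    also have "\<dots> = pi * s1 ^ k * (p * pi) * s1 * p" by (simp only: mult.assoc)
    also have "\<dots> = pi * (s1 ^ k * s1) * p" using p by (simp add: mult.assoc)
    finally show ?case by (simp only: power_Suc2)
  qed
  have sc: "a \<in> R" "b \<in> R" "c \<in> R" "d \<in> R" by (rule scal.intros)+
  have "(pi * s1 * p) ^ 4 = pi * (a * s1 ^ 3) * p + pi * (b * s1 ^ 2) * p + pi * (c * s1) * p + pi * d * p"
    by (simp add: pw q1 distrib_left distrib_right)
  also have "\<dots> = a * (pi * s1 ^ 3 * p) + b * (pi * s1 ^ 2 * p) + c * (pi * s1 * p) + d * (pi * p)"
    by (simp add: scal_mid[OF sc(1)] scal_mid[OF sc(2)] scal_mid[OF sc(3)] mult.assoc)
      (metis cd mult.assoc)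
  also have "\<dots> = a * (pi * s1 * p) ^ 3 + b * (pi * s1 * p) ^ 2 + c * (pi * s1 * p) + d"
    using p by (simp add: pw)
  finally show ?thesis .
qed

lemma line_nf:
  assumes M: "submod R M"
    and v1: "mulnf vi v = (0, [])" and v2: "mulnf v vi = (0, [])"
    and W0: "ev (mulnf s (npw (mulnf (mulnf vi xnf) v) (mulnf (mulnf vi Xnf) v) t)) \<in> M"
    and W1: "ev (mulnf s (npw (mulnf (mulnf vi xnf) v) (mulnf (mulnf vi Xnf) v) (t + 1))) \<in> M"
    and W2: "ev (mulnf s (npw (mulnf (mulnf vi xnf) v) (mulnf (mulnf vi Xnf) v) (t + 2))) \<in> M"
    and W3: "ev (mulnf s (npw (mulnf (mulnf vi xnf) v) (mulnf (mulnf vi Xnf) v) (t + 3))) \<in> M"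
  shows "ev (mulnf s (npw (mulnf (mulnf vi xnf) v) (mulnf (mulnf vi Xnf) v) n)) \<in> M"
proof -
  have p: "ev vi * ev v = 1" "ev v * ev vi = 1"
    using arg_cong[OF v1, of ev] arg_cong[OF v2, of ev] by (simp_all add: ev_mulnf ev_one)
  have q: "ev (mulnf (mulnf vi xnf) v) = ev vi * s1 * ev v" "ev (mulnf (mulnf vi Xnf) v) = ev vi * t1 * ev v"
    by (simp_all add: ev_mulnf ev_xnf ev_Xnf)
  have qi: "(ev vi * s1 * ev v) * (ev vi * t1 * ev v) = 1" "(ev vi * t1 * ev v) * (ev vi * s1 * ev v) = 1"
    using p by (simp_all add: mult.assoc canc) (simp_all add: mult.assoc[symmetric] i1 i1')
  have e: "ev (mulnf s (npw (mulnf (mulnf vi xnf) v) (mulnf (mulnf vi Xnf) v) j)) =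
      ev s * zpw (ev vi * s1 * ev v) (ev vi * t1 * ev v) j * 1" for j
    by (simp add: ev_mulnf ev_npw ev_xnf ev_Xnf)
  show ?thesis unfolding e
    by (rule window[OF M quart_conj[OF p] qi, of _ t]) (use W0 W1 W2 W3 in \<open>simp_all only: e\<close>)
qed

end


lemma npwn_num: "npwn c (numeral k) = mulnf (npwn c (pred_numeral k)) c"
  by (simp add: numeral_eq_Suc)
lemma npwn_1: "npwn c 1 = mulnf (0, []) c" by simp
lemmas nfs = mulnf_def Let_def npw_def npwn_num npwn_1 xnf_def Xnf_def ynf_def Ynf_def

context H4 begin

abbreviation "u1 \<equiv> usub R s1"
abbreviation "u2 \<equiv> usub R s2"
abbreviation "om \<equiv> s2 * s1 ^ 2 * s2"
abbreviation "omi \<equiv> t2 * t1 ^ 2 * t2"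

definition "P0 = mprod3 R u1 u2 u1"
definition "P1 = mprod3 R u1 {s2 * t1 * s2} u1"
definition "P2 = mprod3 R u1 {t2 * s1 * t2} u1"
definition "P3 = mprod2 R u1 {om}"
definition "P4 = mprod2 R u1 {omi}"
definition "P5 = mprod2 R u1 {omi ^ 2}"
definition "Q5 = mprod3 R u1 {s2 * t1 ^ 2 * s2} u1"
definition "Q6 = mprod3 R u1 {t2 ^ 2 * t1 ^ 2 * t2 ^ 2} u1"

definition "V = P0 \<oplus>\<^sub>m P1 \<oplus>\<^sub>m P2 \<oplus>\<^sub>m P3 \<oplus>\<^sub>m P4 \<oplus>\<^sub>m P5"
definition "U = P0 \<oplus>\<^sub>m P1 \<oplus>\<^sub>m P2 \<oplus>\<^sub>m P4 \<oplus>\<^sub>m Q5 \<oplus>\<^sub>m Q6"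

lemma U_eq: "Ufull R s1 s2 t1 t2 = U"
  unfolding U_def Ufull_def Uprime_def P0_def P1_def P2_def P4_def Q5_def Q6_def ..

lemma sm_m3: "submod R (mprod3 R X Y Z)" unfolding mprod3_def by (rule submod_ls)
lemma sm_m2: "submod R (mprod2 R X Y)" unfolding mprod2_def by (rule submod_ls)

lemma smP: "submod R P0" "submod R P1" "submod R P2" "submod R P3" "submod R P4" "submod R P5"
  "submod R Q5" "submod R Q6"
  unfolding P0_def P1_def P2_def P3_def P4_def P5_def Q5_def Q6_def by (rule sm_m3 sm_m2)+

lemma smV: "submod R V" unfolding V_def by (intro submod_msum smP)
lemma smU: "submod R U" unfolding U_def by (intro submod_msum smP)

lemma s1_u1: "s1 \<in> u1" using usub_pow[of s1 1] by simp
lemma one_u1: "1 \<in> u1" using usub_pow[of s1 0] by simp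
lemma t1_u1: "t1 \<in> u1" by (rule usub_inv[OF q1 i1 i1'])
lemma s2_u2: "s2 \<in> u2" using usub_pow[of s2 1] by simp
lemma one_u2: "1 \<in> u2" using usub_pow[of s2 0] by simp
lemma t2_u2: "t2 \<in> u2" by (rule usub_inv[OF q2 i2 i2'])

lemma m3_in: "p \<in> X \<Longrightarrow> h \<in> H \<Longrightarrow> q \<in> Y \<Longrightarrow> p * h * q \<in> mprod3 R X H Y"
  unfolding mprod3_def by (rule lspan_base) (auto intro: scal.one)
lemma m2_in: "p \<in> X \<Longrightarrow> h \<in> H \<Longrightarrow> p * h \<in> mprod2 R X H"
  unfolding mprod2_def by (rule lspan_base) (auto intro: scal.one)

lemma m3_bi:
  assumes L: "L \<in> u1" and Q: "Q \<in> u1" and v: "v \<in> mprod3 R u1 H u1"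
  shows "L * v * Q \<in> mprod3 R u1 H u1"
  using v unfolding mprod3_def
proof (rule lin[OF submod_ls, rotated])
  fix x assume "x \<in> {x * y * z |x y z. x \<in> u1 \<and> y \<in> H \<and> z \<in> u1}"
  then obtain p h q where x: "x = p * h * q" "p \<in> u1" "h \<in> H" "q \<in> u1" by blast
  have e: "L * x * Q = (L * p) * h * (q * Q)" by (simp add: x mult.assoc)
  have m: "(L * p) * h * (q * Q) \<in> mprod3 R u1 H u1"
    by (rule m3_in[OF usub_mult[OF L x(2)] x(3) usub_mult[OF x(4) Q]])
  show "L * x * Q \<in> lspan R {x * y * z |x y z. x \<in> u1 \<and> y \<in> H \<and> z \<in> u1}"
    using e m unfolding mprod3_def by (simp only:)
qed

lemma m2_bi:
  assumes L: "L \<in> u1" and Q: "Q \<in> u1" and w: "w * Q = Q * w" and v: "v \<in> mprod2 R u1 {w}"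
  shows "L * v * Q \<in> mprod2 R u1 {w}"
  using v unfolding mprod2_def
proof (rule lin[OF submod_ls, rotated])
  fix x assume "x \<in> {x * y |x y. x \<in> u1 \<and> y \<in> {w}}"
  then obtain p where x: "x = p * w" "p \<in> u1" by blast
  have e: "L * x * Q = (L * p * Q) * w" by (simp add: x mult.assoc w)
  have m: "(L * p * Q) * w \<in> mprod2 R u1 {w}"
    by (rule m2_in[OF usub_mult[OF usub_mult[OF L x(2)] Q]]) simp
  show "L * x * Q \<in> lspan R {x * y |x y. x \<in> u1 \<and> y \<in> {w}}"
    using e m unfolding mprod2_def by (simp only:)
qed

lemma wv_eq: "wnf u = wnf w \<Longrightarrow> wv u = wv w" by (metis ev_wnf)

lemma comm_t1: "x * s1 = s1 * x \<Longrightarrow> x * t1 = t1 * x"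
proof -
  assume h: "x * s1 = s1 * x"
  have "t1 * x = t1 * x * s1 * t1" by (simp add: mult.assoc i1)
  also have "\<dots> = t1 * s1 * x * t1" by (simp add: mult.assoc h)
  finally show ?thesis by (simp add: i1')
qed

lemma om_s1: "om * s1 = s1 * om"
proof -
  have "wv [Gy, Gx, Gx, Gy, Gx] = wv [Gx, Gy, Gx, Gx, Gy]" by (rule wv_eq) (simp add: nfs)
  then show ?thesis by (simp add: mult.assoc power2_eq_square)
qed

lemma omi_s1: "omi * s1 = s1 * omi"
proof -
  have "wv [GY, GX, GX, GY, Gx] = wv [Gx, GY, GX, GX, GY]" by (rule wv_eq) (simp add: nfs)
  then show ?thesis by (simp add: mult.assoc power2_eq_square)
qed

lemma sq_comm: "w * s1 = s1 * w \<Longrightarrow> w ^ 2 * s1 = s1 * w ^ 2"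
proof -
  assume h: "w * s1 = s1 * w"
  have "w ^ 2 * s1 = w * (w * s1)" by (simp add: power2_eq_square mult.assoc)
  also have "\<dots> = (w * s1) * w" by (simp only: h mult.assoc[symmetric])
  also have "\<dots> = s1 * w ^ 2" by (simp only: h power2_eq_square mult.assoc)
  finally show ?thesis .
qed

lemma omi2_s1: "omi ^ 2 * s1 = s1 * omi ^ 2" by (rule sq_comm[OF omi_s1])

lemma om_comm: "Q \<in> {1, s1, t1} \<Longrightarrow> om * Q = Q * om \<and> omi * Q = Q * omi \<and> omi ^ 2 * Q = Q * omi ^ 2"
proof -
  assume "Q \<in> {1, s1, t1}"
  then consider "Q = 1" | "Q = s1" | "Q = t1" by blast
  then show ?thesis
  proof cases
    case 1 then show ?thesis by simp
  next
    case 2 then show ?thesis using om_s1 omi_s1 omi2_s1 by simp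
  next
    case 3 then show ?thesis using comm_t1[OF om_s1] comm_t1[OF omi_s1] comm_t1[OF omi2_s1] by simp
  qed
qed

end

context H4 begin

lemma sub_l: "submod R M2 \<Longrightarrow> M1 \<subseteq> M1 \<oplus>\<^sub>m M2" using msum_left by blast
lemma sub_r: "submod R M1 \<Longrightarrow> M2 \<subseteq> M1 \<oplus>\<^sub>m M2" using msum_right by blast

lemma smS: "submod R (P0 \<oplus>\<^sub>m P1)" "submod R (P0 \<oplus>\<^sub>m P1 \<oplus>\<^sub>m P2)"
  "submod R (P0 \<oplus>\<^sub>m P1 \<oplus>\<^sub>m P2 \<oplus>\<^sub>m P3)" "submod R (P0 \<oplus>\<^sub>m P1 \<oplus>\<^sub>m P2 \<oplus>\<^sub>m P3 \<oplus>\<^sub>m P4)"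
  "submod R (P0 \<oplus>\<^sub>m P1 \<oplus>\<^sub>m P2 \<oplus>\<^sub>m P4)" "submod R (P0 \<oplus>\<^sub>m P1 \<oplus>\<^sub>m P2 \<oplus>\<^sub>m P4 \<oplus>\<^sub>m Q5)"
  by (intro submod_msum smP)+

lemma V_parts: "P0 \<subseteq> V" "P1 \<subseteq> V" "P2 \<subseteq> V" "P3 \<subseteq> V" "P4 \<subseteq> V" "P5 \<subseteq> V"
proof -
  note l = sub_l[OF smP(2), of P0] sub_l[OF smP(3), of "P0 \<oplus>\<^sub>m P1"] sub_l[OF smP(4), of "P0 \<oplus>\<^sub>m P1 \<oplus>\<^sub>m P2"]
    sub_l[OF smP(5), of "P0 \<oplus>\<^sub>m P1 \<oplus>\<^sub>m P2 \<oplus>\<^sub>m P3"] sub_l[OF smP(6), of "P0 \<oplus>\<^sub>m P1 \<oplus>\<^sub>m P2 \<oplus>\<^sub>m P3 \<oplus>\<^sub>m P4"]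
  note r = sub_r[OF smP(1), of P1] sub_r[OF smS(1), of P2] sub_r[OF smS(2), of P3] sub_r[OF smS(3), of P4]
    sub_r[OF smS(4), of P5]
  show "P0 \<subseteq> V" "P1 \<subseteq> V" "P2 \<subseteq> V" "P3 \<subseteq> V" "P4 \<subseteq> V" "P5 \<subseteq> V"
    unfolding V_def using l r by (meson order.trans)+
qed

lemma U_parts: "P0 \<subseteq> U" "P1 \<subseteq> U" "P2 \<subseteq> U" "P4 \<subseteq> U" "Q5 \<subseteq> U" "Q6 \<subseteq> U"
proof -
  note l = sub_l[OF smP(2), of P0] sub_l[OF smP(3), of "P0 \<oplus>\<^sub>m P1"] sub_l[OF smP(5), of "P0 \<oplus>\<^sub>m P1 \<oplus>\<^sub>m P2"]
    sub_l[OF smP(7), of "P0 \<oplus>\<^sub>m P1 \<oplus>\<^sub>m P2 \<oplus>\<^sub>m P4"] sub_l[OF smP(8), of "P0 \<oplus>\<^sub>m P1 \<oplus>\<^sub>m P2 \<oplus>\<^sub>m P4 \<oplus>\<^sub>m Q5"]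
  note r = sub_r[OF smP(1), of P1] sub_r[OF smS(1), of P2] sub_r[OF smS(2), of P4] sub_r[OF smS(5), of Q5]
    sub_r[OF smS(6), of Q6]
  show "P0 \<subseteq> U" "P1 \<subseteq> U" "P2 \<subseteq> U" "P4 \<subseteq> U" "Q5 \<subseteq> U" "Q6 \<subseteq> U"
    unfolding U_def using l r by (meson order.trans)+
qed

lemma V_lin:
  assumes M: "submod R M" and add: "\<And>u v. f (u + v) = f u + f v"
    and h0: "\<And>u. u \<in> P0 \<Longrightarrow> f u \<in> M" and h1: "\<And>u. u \<in> P1 \<Longrightarrow> f u \<in> M"
    and h2: "\<And>u. u \<in> P2 \<Longrightarrow> f u \<in> M" and h3: "\<And>u. u \<in> P3 \<Longrightarrow> f u \<in> M"
    and h4: "\<And>u. u \<in> P4 \<Longrightarrow> f u \<in> M" and h5: "\<And>u. u \<in> P5 \<Longrightarrow> f u \<in> M"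
    and m: "m \<in> V"
  shows "f m \<in> M"
proof -
  have s1: "\<And>u. u \<in> P0 \<oplus>\<^sub>m P1 \<Longrightarrow> f u \<in> M" by (rule msum_lin[OF M add h0 h1])
  have s2: "\<And>u. u \<in> P0 \<oplus>\<^sub>m P1 \<oplus>\<^sub>m P2 \<Longrightarrow> f u \<in> M" by (rule msum_lin[OF M add s1 h2])
  have s3: "\<And>u. u \<in> P0 \<oplus>\<^sub>m P1 \<oplus>\<^sub>m P2 \<oplus>\<^sub>m P3 \<Longrightarrow> f u \<in> M" by (rule msum_lin[OF M add s2 h3])
  have s4: "\<And>u. u \<in> P0 \<oplus>\<^sub>m P1 \<oplus>\<^sub>m P2 \<oplus>\<^sub>m P3 \<oplus>\<^sub>m P4 \<Longrightarrow> f u \<in> M" by (rule msum_lin[OF M add s3 h4])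
  show ?thesis by (rule msum_lin[OF M add s4 h5 m[unfolded V_def]])
qed

lemma U_lin:
  assumes M: "submod R M" and add: "\<And>u v. f (u + v) = f u + f v"
    and h0: "\<And>u. u \<in> P0 \<Longrightarrow> f u \<in> M" and h1: "\<And>u. u \<in> P1 \<Longrightarrow> f u \<in> M"
    and h2: "\<And>u. u \<in> P2 \<Longrightarrow> f u \<in> M" and h4: "\<And>u. u \<in> P4 \<Longrightarrow> f u \<in> M"
    and h5: "\<And>u. u \<in> Q5 \<Longrightarrow> f u \<in> M" and h6: "\<And>u. u \<in> Q6 \<Longrightarrow> f u \<in> M"
    and m: "m \<in> U"
  shows "f m \<in> M"
proof -
  have s1: "\<And>u. u \<in> P0 \<oplus>\<^sub>m P1 \<Longrightarrow> f u \<in> M" by (rule msum_lin[OF M add h0 h1])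
  have s2: "\<And>u. u \<in> P0 \<oplus>\<^sub>m P1 \<oplus>\<^sub>m P2 \<Longrightarrow> f u \<in> M" by (rule msum_lin[OF M add s1 h2])
  have s3: "\<And>u. u \<in> P0 \<oplus>\<^sub>m P1 \<oplus>\<^sub>m P2 \<oplus>\<^sub>m P4 \<Longrightarrow> f u \<in> M" by (rule msum_lin[OF M add s2 h4])
  have s4: "\<And>u. u \<in> P0 \<oplus>\<^sub>m P1 \<oplus>\<^sub>m P2 \<oplus>\<^sub>m P4 \<oplus>\<^sub>m Q5 \<Longrightarrow> f u \<in> M" by (rule msum_lin[OF M add s3 h5])
  show ?thesis by (rule msum_lin[OF M add s4 h6 m[unfolded U_def]])
qed

lemma LQ_add: "(L::'a) * (u + v) * Q = L * u * Q + L * v * Q" by (simp add: distrib_left distrib_right)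

lemma Q_u1: "Q \<in> {1, s1, t1} \<Longrightarrow> Q \<in> u1" using one_u1 s1_u1 t1_u1 by auto

lemma V_LQ:
  assumes L: "L \<in> u1" and Q: "Q \<in> {1, s1, t1}" and m: "m \<in> V"
  shows "L * m * Q \<in> V"
proof -
  note Qu = Q_u1[OF Q] and c = om_comm[OF Q]
  show ?thesis
  proof (rule V_lin[OF smV, where f = "\<lambda>v. L * v * Q", OF LQ_add _ _ _ _ _ _ m])
    fix u
    show "u \<in> P0 \<Longrightarrow> L * u * Q \<in> V" using m3_bi[OF L Qu] V_parts unfolding P0_def by blast
    show "u \<in> P1 \<Longrightarrow> L * u * Q \<in> V" using m3_bi[OF L Qu] V_parts unfolding P1_def by blast
    show "u \<in> P2 \<Longrightarrow> L * u * Q \<in> V" using m3_bi[OF L Qu] V_parts unfolding P2_def by blast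
    show "u \<in> P3 \<Longrightarrow> L * u * Q \<in> V" using m2_bi[OF L Qu] c V_parts unfolding P3_def by blast
    show "u \<in> P4 \<Longrightarrow> L * u * Q \<in> V" using m2_bi[OF L Qu] c V_parts unfolding P4_def by blast
    show "u \<in> P5 \<Longrightarrow> L * u * Q \<in> V" using m2_bi[OF L Qu] c V_parts unfolding P5_def by blast
  qed
qed

lemma U_LQ:
  assumes L: "L \<in> u1" and Q: "Q \<in> {1, s1, t1}" and m: "m \<in> U"
  shows "L * m * Q \<in> U"
proof -
  note Qu = Q_u1[OF Q] and c = om_comm[OF Q]
  show ?thesis
  proof (rule U_lin[OF smU, where f = "\<lambda>v. L * v * Q", OF LQ_add _ _ _ _ _ _ m])
    fix u
    show "u \<in> P0 \<Longrightarrow> L * u * Q \<in> U" using m3_bi[OF L Qu] U_parts unfolding P0_def by blast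
    show "u \<in> P1 \<Longrightarrow> L * u * Q \<in> U" using m3_bi[OF L Qu] U_parts unfolding P1_def by blast
    show "u \<in> P2 \<Longrightarrow> L * u * Q \<in> U" using m3_bi[OF L Qu] U_parts unfolding P2_def by blast
    show "u \<in> P4 \<Longrightarrow> L * u * Q \<in> U" using m2_bi[OF L Qu] c U_parts unfolding P4_def by blast
    show "u \<in> Q5 \<Longrightarrow> L * u * Q \<in> U" using m3_bi[OF L Qu] U_parts unfolding Q5_def by blast
    show "u \<in> Q6 \<Longrightarrow> L * u * Q \<in> U" using m3_bi[OF L Qu] U_parts unfolding Q6_def by blast
  qed
qed

lemma bimodV: "bimod V"
  unfolding bimod_def using V_LQ[of s1 1] V_LQ[of t1 1] V_LQ[of 1 s1] V_LQ[of 1 t1] s1_u1 t1_u1 one_u1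
  by auto

lemma bimodU: "bimod U"
  unfolding bimod_def using U_LQ[of s1 1] U_LQ[of t1 1] U_LQ[of 1 s1] U_LQ[of 1 t1] s1_u1 t1_u1 one_u1
  by auto

lemma pows_lin:
  assumes M: "submod R M" and h: "\<And>n. L * s ^ n * Q \<in> M" and p: "p \<in> usub R s"
  shows "L * p * Q \<in> M"
  using p unfolding usub_def by (rule lin[OF M, rotated]) (use h in auto)

lemma rq: assumes x: "x \<in> V" and q: "q \<in> u1" shows "x * q \<in> V"
proof -
  have "x * s1 ^ n * 1 \<in> V" for n
    using bimod_zpw[OF bimodV x, of 0 "int n"] by (simp add: zpw_def)
  then have "x * q * 1 \<in> V" by (rule pows_lin[OF smV _ q])
  then show ?thesis by simp
qed

lemma V_s2:
  assumes c0: "\<And>n k. s2 * s1 ^ n * s2 ^ k \<in> V"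
    and c1: "\<And>n. s2 * s1 ^ n * (s2 * t1 * s2) \<in> V"
    and c2: "\<And>n. s2 * s1 ^ n * (t2 * s1 * t2) \<in> V"
    and c3: "\<And>n. s2 * s1 ^ n * om \<in> V"
    and c4: "\<And>n. s2 * s1 ^ n * omi \<in> V"
    and c5: "\<And>n. s2 * s1 ^ n * omi ^ 2 \<in> V"
    and m: "m \<in> V"
  shows "s2 * m \<in> V"
proof -
  have P3: "s2 * u * 1 \<in> V" if "u \<in> mprod3 R u1 H u1" and hh: "\<And>n h. h \<in> H \<Longrightarrow> s2 * s1 ^ n * h \<in> V" for u H
    using that(1) unfolding mprod3_def
  proof (rule lin[OF smV, rotated])
    fix x assume "x \<in> {x * y * z |x y z. x \<in> u1 \<and> y \<in> H \<and> z \<in> u1}"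
    then obtain p h q where x: "x = p * h * q" "p \<in> u1" "h \<in> H" "q \<in> u1" by blast
    have "s2 * p * h \<in> V" by (rule pows_lin[OF smV hh[OF x(3)] x(2)])
    then have "s2 * p * h * q \<in> V" by (rule rq[OF _ x(4)])
    then show "s2 * x * 1 \<in> V" by (simp add: x mult.assoc)
  qed
  have P2: "s2 * u * 1 \<in> V" if "u \<in> mprod2 R u1 {w}" and hh: "\<And>n. s2 * s1 ^ n * w \<in> V" for u w
    using that(1) unfolding mprod2_def
  proof (rule lin[OF smV, rotated])
    fix x assume "x \<in> {x * y |x y. x \<in> u1 \<and> y \<in> {w}}"
    then obtain p where x: "x = p * w" "p \<in> u1" by blast
    have "s2 * p * w \<in> V" by (rule pows_lin[OF smV hh x(2)])
    then show "s2 * x * 1 \<in> V" by (simp add: x mult.assoc)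
  qed
  have h0: "s2 * s1 ^ n * h \<in> V" if "h \<in> u2" for n h
  proof -
    have "s2 * s1 ^ n * h * 1 \<in> V" by (rule pows_lin[OF smV _ that]) (simp add: c0)
    then show ?thesis by simp
  qed
  show ?thesis
  proof (rule V_lin[OF smV, where f = "\<lambda>v. s2 * v * 1", simplified, OF _ _ _ _ _ _ _ m])
    fix u v show "s2 * (u + v) = s2 * u + s2 * v" by (simp add: distrib_left)
  next
    fix u
    show "u \<in> P0 \<Longrightarrow> s2 * u \<in> V" using P3[of u u2] h0 unfolding P0_def by simp
    show "u \<in> P1 \<Longrightarrow> s2 * u \<in> V" using P3[of u "{s2 * t1 * s2}"] c1 unfolding P1_def by simp
    show "u \<in> P2 \<Longrightarrow> s2 * u \<in> V" using P3[of u "{t2 * s1 * t2}"] c2 unfolding P2_def by simp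
    show "u \<in> P3 \<Longrightarrow> s2 * u \<in> V" using P2[of u om] c3 unfolding P3_def by simp
    show "u \<in> P4 \<Longrightarrow> s2 * u \<in> V" using P2[of u omi] c4 unfolding P4_def by simp
    show "u \<in> P5 \<Longrightarrow> s2 * u \<in> V" using P2[of u "omi ^ 2"] c5 unfolding P5_def by simp
  qed
qed

abbreviation "Hs \<equiv> lspan R (words {s1, s2, t1, t2})"

lemma words_mult: "w1 \<in> words G \<Longrightarrow> w2 \<in> words G \<Longrightarrow> w1 * w2 \<in> words G"
  by (induction w1 rule: words.induct) (simp_all add: mult.assoc words.step)

lemma Hs_mult: assumes u: "u \<in> Hs" and v: "v \<in> Hs" shows "u * v \<in> Hs"
proof -
  have "1 * u * v \<in> Hs"
  proof (rule lin[OF submod_ls _ u])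
    fix x assume x: "x \<in> words {s1, s2, t1, t2}"
    have "x * v * 1 \<in> Hs"
    proof (rule lin[OF submod_ls _ v])
      fix y assume y: "y \<in> words {s1, s2, t1, t2}"
      show "x * y * 1 \<in> Hs" using words_mult[OF x y] by (simp add: lspan_base scal.one)
    qed
    then show "1 * x * v \<in> Hs" by simp
  qed
  then show ?thesis by simp
qed

lemma gen_Hs: "g \<in> {s1, s2, t1, t2} \<Longrightarrow> g \<in> Hs"
  using words.step[OF _ words.one, of g] by (simp add: lspan_base scal.one)
lemma one_Hs: "1 \<in> Hs" by (rule lspan_base[OF words.one scal.one])
lemma pow_Hs: "x \<in> Hs \<Longrightarrow> x ^ n \<in> Hs"
  by (induction n) (simp_all add: one_Hs Hs_mult)

lemma usub_Hs: assumes s: "s \<in> Hs" shows "usub R s \<subseteq> Hs"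
proof
  fix u assume u: "u \<in> usub R s"
  have "{s ^ n |n. True} \<subseteq> Hs" using pow_Hs[OF s] by blast
  then show "u \<in> Hs" using u unfolding usub_def by (rule lspan_sub[OF submod_ls])
qed

lemma m3_Hs: assumes X: "X \<subseteq> Hs" and Y: "Y \<subseteq> Hs" and Z: "Z \<subseteq> Hs" shows "mprod3 R X Y Z \<subseteq> Hs"
proof
  fix u assume u: "u \<in> mprod3 R X Y Z"
  have "{x * y * z |x y z. x \<in> X \<and> y \<in> Y \<and> z \<in> Z} \<subseteq> Hs"
  proof
    fix w assume "w \<in> {x * y * z |x y z. x \<in> X \<and> y \<in> Y \<and> z \<in> Z}"
    then obtain x y z where w: "w = x * y * z" "x \<in> X" "y \<in> Y" "z \<in> Z" by blast
    show "w \<in> Hs" unfolding w(1) by (intro Hs_mult) (use w X Y Z in blast)+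
  qed
  then show "u \<in> Hs" using u unfolding mprod3_def by (rule lspan_sub[OF submod_ls])
qed
lemma m2_Hs: assumes X: "X \<subseteq> Hs" and Y: "Y \<subseteq> Hs" shows "mprod2 R X Y \<subseteq> Hs"
proof
  fix u assume u: "u \<in> mprod2 R X Y"
  have "{x * y |x y. x \<in> X \<and> y \<in> Y} \<subseteq> Hs"
  proof
    fix w assume "w \<in> {x * y |x y. x \<in> X \<and> y \<in> Y}"
    then obtain x y where w: "w = x * y" "x \<in> X" "y \<in> Y" by blast
    show "w \<in> Hs" unfolding w(1) by (intro Hs_mult) (use w X Y in blast)+
  qed
  then show "u \<in> Hs" using u unfolding mprod2_def by (rule lspan_sub[OF submod_ls])
qed

lemma U_Hs: "U \<subseteq> Hs"
proof
  fix m assume m: "m \<in> U"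
  have g: "s1 \<in> Hs" "s2 \<in> Hs" "t1 \<in> Hs" "t2 \<in> Hs" by (simp_all add: gen_Hs)
  note u = usub_Hs[OF g(1)] usub_Hs[OF g(2)]
  have e: "{s2 * t1 * s2} \<subseteq> Hs" "{t2 * s1 * t2} \<subseteq> Hs" "{omi} \<subseteq> Hs" "{s2 * t1 ^ 2 * s2} \<subseteq> Hs"
    "{t2 ^ 2 * t1 ^ 2 * t2 ^ 2} \<subseteq> Hs"
    by (simp_all add: Hs_mult pow_Hs g)
  show "m \<in> Hs"
  proof (rule U_lin[OF submod_ls, where f = "\<lambda>v. v", OF _ _ _ _ _ _ _ m])
    fix v
    show "v \<in> P0 \<Longrightarrow> v \<in> Hs" unfolding P0_def by (rule subsetD[OF m3_Hs[OF u(1) u(2) u(1)]])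
    show "v \<in> P1 \<Longrightarrow> v \<in> Hs" unfolding P1_def by (rule subsetD[OF m3_Hs[OF u(1) e(1) u(1)]])
    show "v \<in> P2 \<Longrightarrow> v \<in> Hs" unfolding P2_def by (rule subsetD[OF m3_Hs[OF u(1) e(2) u(1)]])
    show "v \<in> P4 \<Longrightarrow> v \<in> Hs" unfolding P4_def by (rule subsetD[OF m2_Hs[OF u(1) e(3)]])
    show "v \<in> Q5 \<Longrightarrow> v \<in> Hs" unfolding Q5_def by (rule subsetD[OF m3_Hs[OF u(1) e(4) u(1)]])
    show "v \<in> Q6 \<Longrightarrow> v \<in> Hs" unfolding Q6_def by (rule subsetD[OF m3_Hs[OF u(1) e(5) u(1)]])
  qed simp
qed

lemma main:
  assumes c0: "\<And>n k. s2 * s1 ^ n * s2 ^ k \<in> V"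
    and c1: "\<And>n. s2 * s1 ^ n * (s2 * t1 * s2) \<in> V"
    and c2: "\<And>n. s2 * s1 ^ n * (t2 * s1 * t2) \<in> V"
    and c3: "\<And>n. s2 * s1 ^ n * om \<in> V"
    and c4: "\<And>n. s2 * s1 ^ n * omi \<in> V"
    and c5: "\<And>n. s2 * s1 ^ n * omi ^ 2 \<in> V"
    and uo: "om \<in> U" and uo2: "omi ^ 2 \<in> U"
  shows "U = V \<and> Hs = U"
proof -
  note s2c = V_s2[OF c0 c1 c2 c3 c4 c5]
  have "1 * 1 * 1 \<in> P0" unfolding P0_def by (rule m3_in[OF one_u1 one_u2 one_u1])
  then have oneV: "1 \<in> V" using V_parts(1) by auto
  have s2p: "s2 ^ n * w \<in> V" if "w \<in> V" for n w
    by (induction n) (simp_all add: that mult.assoc s2c)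
  have wV: "w \<in> V" if "w \<in> words {s1, s2, t1, t2}" for w
    using that
  proof (induction w rule: words.induct)
    case one then show ?case by (rule oneV)
  next
    case (step g w)
    have l1: "s1 * w \<in> V" using V_LQ[OF s1_u1 _ step.IH, of 1] by simp
    have l2: "t1 * w \<in> V" using V_LQ[OF t1_u1 _ step.IH, of 1] by simp
    have l3: "t2 * w \<in> V"
      using pows_lin[OF smV _ t2_u2, of 1 w] s2p[OF step.IH] by simp
    show ?case using step.hyps l1 l2 l3 s2c[OF step.IH] by auto
  qed
  have HV: "Hs \<subseteq> V" using lspan_sub[OF smV] wV by blast
  have pU: "u \<in> U" if "u \<in> mprod2 R u1 {w}" and w: "w \<in> U" for u w
    using that(1) unfolding mprod2_def
  proof (rule lin[OF smU, of _ 1 1, simplified, rotated])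
    fix x assume "x \<in> {x * y |x y. x \<in> u1 \<and> y \<in> {w}}"
    then obtain p where x: "x = p * w" "p \<in> u1" by blast
    have "1 * s1 ^ n * w \<in> U" for n using bimod_zpw[OF bimodU w, of "int n" 0] by (simp add: zpw_def)
    then have "1 * p * w \<in> U" by (rule pows_lin[OF smU _ x(2)])
    then show "x \<in> U" by (simp add: x)
  qed
  have VU: "V \<subseteq> U"
  proof
    fix m assume m: "m \<in> V"
    show "m \<in> U"
    proof (rule V_lin[OF smU, where f = "\<lambda>v. v", OF _ _ _ _ _ _ _ m])
      fix v
      show "v \<in> P0 \<Longrightarrow> v \<in> U" using U_parts by blast
      show "v \<in> P1 \<Longrightarrow> v \<in> U" using U_parts by blast
      show "v \<in> P2 \<Longrightarrow> v \<in> U" using U_parts by blast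
      show "v \<in> P4 \<Longrightarrow> v \<in> U" using U_parts by blast
      show "v \<in> P3 \<Longrightarrow> v \<in> U" unfolding P3_def using pU uo by blast
      show "v \<in> P5 \<Longrightarrow> v \<in> U" unfolding P5_def using pU uo2 by blast
    qed simp
  qed
  show ?thesis using U_Hs HV VU by blast
qed

end

context H4 begin
lemma wv_u2: "set W \<subseteq> {Gy, GY} \<Longrightarrow> wv W \<in> u2"
proof (induction W)
  case Nil then show ?case using one_u2 by simp
next
  case (Cons g W)
  then have "g = Gy \<or> g = GY" "wv W \<in> u2" by auto
  then show ?case using s2_u2 t2_u2 usub_mult by auto
qed

lemma in3: "h \<in> H \<Longrightarrow> mprod3 R u1 H u1 \<subseteq> M \<Longrightarrow> h \<in> M"
  using m3_in[OF one_u1 _ one_u1, of h H] by auto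
lemma in2: "h \<in> H \<Longrightarrow> mprod2 R u1 H \<subseteq> M \<Longrightarrow> h \<in> M"
  using m2_in[OF one_u1, of h H] by auto

lemma yV: "h \<in> u2 \<Longrightarrow> h \<in> V" using in3[of h u2 V] V_parts(1) unfolding P0_def by blast
lemma yU: "h \<in> u2 \<Longrightarrow> h \<in> U" using in3[of h u2 U] U_parts(1) unfolding P0_def by blast
lemma bV_ym4: "wv [GY, GY, GY, GY] \<in> V" by (rule yV[OF wv_u2]) simp
lemma bV_ym3: "wv [GY, GY, GY] \<in> V" by (rule yV[OF wv_u2]) simp
lemma bV_ym2: "wv [GY, GY] \<in> V" by (rule yV[OF wv_u2]) simp
lemma bV_ym1: "wv [GY] \<in> V" by (rule yV[OF wv_u2]) simp
lemma bV_y0: "wv [] \<in> V" by (rule yV[OF wv_u2]) simp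
lemma bV_y1: "wv [Gy] \<in> V" by (rule yV[OF wv_u2]) simp
lemma bV_y2: "wv [Gy, Gy] \<in> V" by (rule yV[OF wv_u2]) simp
lemma bV_y3: "wv [Gy, Gy, Gy] \<in> V" by (rule yV[OF wv_u2]) simp
lemma bV_y4: "wv [Gy, Gy, Gy, Gy] \<in> V" by (rule yV[OF wv_u2]) simp
lemma bU_ym4: "wv [GY, GY, GY, GY] \<in> U" by (rule yU[OF wv_u2]) simp
lemma bU_ym3: "wv [GY, GY, GY] \<in> U" by (rule yU[OF wv_u2]) simp
lemma bU_ym2: "wv [GY, GY] \<in> U" by (rule yU[OF wv_u2]) simp
lemma bU_ym1: "wv [GY] \<in> U" by (rule yU[OF wv_u2]) simp
lemma bU_y0: "wv [] \<in> U" by (rule yU[OF wv_u2]) simp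
lemma bU_y1: "wv [Gy] \<in> U" by (rule yU[OF wv_u2]) simp
lemma bU_y2: "wv [Gy, Gy] \<in> U" by (rule yU[OF wv_u2]) simp
lemma bU_y3: "wv [Gy, Gy, Gy] \<in> U" by (rule yU[OF wv_u2]) simp
lemma bU_y4: "wv [Gy, Gy, Gy, Gy] \<in> U" by (rule yU[OF wv_u2]) simp
lemma bV_yXy: "wv [Gy, GX, Gy] \<in> V"
proof -
  have "s2 * t1 * s2 \<in> V" by (rule in3[of _ "{s2 * t1 * s2}"]) (use V_parts(2) in \<open>simp_all add: P1_def\<close>)
  then show ?thesis by (simp add: mult.assoc power2_eq_square)
qed
lemma bV_YxY: "wv [GY, Gx, GY] \<in> V"
proof -
  have "t2 * s1 * t2 \<in> V" by (rule in3[of _ "{t2 * s1 * t2}"]) (use V_parts(3) in \<open>simp_all add: P2_def\<close>)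
  then show ?thesis by (simp add: mult.assoc power2_eq_square)
qed
lemma bV_om: "wv [Gy, Gx, Gx, Gy] \<in> V"
proof -
  have "om \<in> V" by (rule in2[of _ "{om}"]) (use V_parts(4) in \<open>simp_all add: P3_def\<close>)
  then show ?thesis by (simp add: mult.assoc power2_eq_square)
qed
lemma bV_omi: "wv [GY, GX, GX, GY] \<in> V"
proof -
  have "omi \<in> V" by (rule in2[of _ "{omi}"]) (use V_parts(5) in \<open>simp_all add: P4_def\<close>)
  then show ?thesis by (simp add: mult.assoc power2_eq_square)
qed
lemma bV_omi2: "wv [GY, GX, GX, GY, GY, GX, GX, GY] \<in> V"
proof -
  have "omi ^ 2 \<in> V" by (rule in2[of _ "{omi ^ 2}"]) (use V_parts(6) in \<open>simp_all add: P5_def\<close>)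
  then show ?thesis by (simp add: mult.assoc power2_eq_square)
qed
lemma bU_yXy: "wv [Gy, GX, Gy] \<in> U"
proof -
  have "s2 * t1 * s2 \<in> U" by (rule in3[of _ "{s2 * t1 * s2}"]) (use U_parts(2) in \<open>simp_all add: P1_def\<close>)
  then show ?thesis by (simp add: mult.assoc power2_eq_square)
qed
lemma bU_YxY: "wv [GY, Gx, GY] \<in> U"
proof -
  have "t2 * s1 * t2 \<in> U" by (rule in3[of _ "{t2 * s1 * t2}"]) (use U_parts(3) in \<open>simp_all add: P2_def\<close>)
  then show ?thesis by (simp add: mult.assoc power2_eq_square)
qed
lemma bU_omi: "wv [GY, GX, GX, GY] \<in> U"
proof -
  have "omi \<in> U" by (rule in2[of _ "{omi}"]) (use U_parts(4) in \<open>simp_all add: P4_def\<close>)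
  then show ?thesis by (simp add: mult.assoc power2_eq_square)
qed
lemma bU_yXXy: "wv [Gy, GX, GX, Gy] \<in> U"
proof -
  have "s2 * t1 ^ 2 * s2 \<in> U" by (rule in3[of _ "{s2 * t1 ^ 2 * s2}"]) (use U_parts(5) in \<open>simp_all add: Q5_def\<close>)
  then show ?thesis by (simp add: mult.assoc power2_eq_square)
qed
lemma bU_YYXXYY: "wv [GY, GY, GX, GX, GY, GY] \<in> U"
proof -
  have "t2 ^ 2 * t1 ^ 2 * t2 ^ 2 \<in> U" by (rule in3[of _ "{t2 ^ 2 * t1 ^ 2 * t2 ^ 2}"]) (use U_parts(6) in \<open>simp_all add: Q6_def\<close>)
  then show ?thesis by (simp add: mult.assoc power2_eq_square)
qed

lemma vf0: "ev (-6, [LA, LC, LA, LC, LA, LC, LA, LC]) \<in> V"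
proof -
  have "wv [GY, GX, GX, GY, GY, GX, GX, GY] \<in> V" by (rule bV_omi2)
  then have "ev (wnf [GY, GX, GX, GY, GY, GX, GX, GY]) \<in> V" by (simp only: ev_wnf)
  then show ?thesis by (simp add: nfs)
qed

lemma vf1: "ev (-3, [LB, LA]) \<in> V"
proof -
  have "ev (mulnf (mulnf (npw xnf Xnf (-4)) (-6, [LA, LC, LA, LC, LA, LC, LA, LC])) (npw xnf Xnf (-1))) \<in> V" by (rule dc_nf[OF bimodV vf0])
  then show ?thesis by (simp add: nfs)
qed

lemma vf2: "ev (-3, [LA, LC, LA, LC]) \<in> V"
proof -
  have "wv [GY, GX, GX, GY] \<in> V" by (rule bV_omi)
  then have "ev (wnf [GY, GX, GX, GY]) \<in> V" by (simp only: ev_wnf)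
  then show ?thesis by (simp add: nfs)
qed

lemma vf3: "ev (-4, [LB, LA, LB, LA, LB, LA]) \<in> V"
proof -
  have "ev (mulnf (mulnf (npw xnf Xnf (-4)) (-3, [LA, LC, LA, LC])) (npw xnf Xnf (-1))) \<in> V" by (rule dc_nf[OF bimodV vf2])
  then show ?thesis by (simp add: nfs)
qed

lemma vf4: "ev (-1, [LA, LB]) \<in> V"
proof -
  have "wv [GY] \<in> V" by (rule bV_ym1)
  then have "ev (wnf [GY]) \<in> V" by (simp only: ev_wnf)
  then show ?thesis by (simp add: nfs)
qed

lemma vf5: "ev (-5, [LB, LA, LC, LA, LB, LA, LB, LA]) \<in> V"
proof -
  have "ev (mulnf (mulnf (npw xnf Xnf (-4)) (-1, [LA, LB])) (npw xnf Xnf (-3))) \<in> V" by (rule dc_nf[OF bimodV vf4])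
  then show ?thesis by (simp add: nfs)
qed

lemma vf6: "ev (-2, [LA, LB, LA, LB]) \<in> V"
proof -
  have "wv [GY, GY] \<in> V" by (rule bV_ym2)
  then have "ev (wnf [GY, GY]) \<in> V" by (simp only: ev_wnf)
  then show ?thesis by (simp add: nfs)
qed

lemma vf7: "ev (-6, [LB, LA, LC, LA, LC, LA, LB, LA, LB, LA]) \<in> V"
proof -
  have "ev (mulnf (mulnf (npw xnf Xnf (-3)) (-2, [LA, LB, LA, LB])) (npw xnf Xnf (-2))) \<in> V" by (rule dc_nf[OF bimodV vf6])
  then show ?thesis by (simp add: nfs)
qed

lemma vf8: "ev (-3, [LA, LB, LA, LC, LA, LB]) \<in> V"
proof -
  have "wv [GY, Gx, GY] \<in> V" by (rule bV_YxY)
  then have "ev (wnf [GY, Gx, GY]) \<in> V" by (simp only: ev_wnf)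
  then show ?thesis by (simp add: nfs)
qed

lemma vf9: "ev (-7, [LB, LA, LC, LA, LC, LA, LC, LA, LB, LA, LB, LA]) \<in> V"
proof -
  have "ev (mulnf (mulnf (npw xnf Xnf (-3)) (-3, [LA, LB, LA, LC, LA, LB])) (npw xnf Xnf (-2))) \<in> V" by (rule dc_nf[OF bimodV vf8])
  then show ?thesis by (simp add: nfs)
qed

lemma vf10: "ev (-3, [LA, LB, LA]) \<in> V"
proof -
  have "ev (mulnf (-6, [LB, LA, LC, LA, LC, LA, LB, LA, LB, LA]) (npw (mulnf (mulnf (-1, [LA, LB]) xnf) (-1, [LC, LA])) (mulnf (mulnf (-1, [LA, LB]) Xnf) (-1, [LC, LA])) (-3))) \<in> V"
    by (rule line_nf[OF smV, where t = "(-2)"]) (simp_all add: nfs vf3 vf5 vf7 vf9)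
  then show ?thesis by (simp add: nfs)
qed

lemma vf11: "ev (-4, [LB, LA, LC, LA]) \<in> V"
proof -
  have "ev (mulnf (mulnf (npw xnf Xnf (0)) (-3, [LA, LB, LA])) (npw xnf Xnf (-2))) \<in> V" by (rule dc_nf[OF bimodV vf10])
  then show ?thesis by (simp add: nfs)
qed

lemma vf12: "ev (-5, [LC, LA, LC, LA, LB, LA]) \<in> V"
proof -
  have "ev (mulnf (-6, [LB, LA, LC, LA, LC, LA, LB, LA, LB, LA]) (npw (mulnf (mulnf (-1, [LA, LB]) xnf) (-1, [LC, LA])) (mulnf (mulnf (-1, [LA, LB]) Xnf) (-1, [LC, LA])) (-4))) \<in> V"
    by (rule line_nf[OF smV, where t = "(-2)"]) (simp_all add: nfs vf3 vf5 vf7 vf9)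
  then show ?thesis by (simp add: nfs)
qed

lemma vf13: "ev (-5, [LB, LA, LC, LA, LC, LA]) \<in> V"
proof -
  have "ev (mulnf (mulnf (npw xnf Xnf (1)) (-5, [LC, LA, LC, LA, LB, LA])) (npw xnf Xnf (-1))) \<in> V" by (rule dc_nf[OF bimodV vf12])
  then show ?thesis by (simp add: nfs)
qed

lemma vf14: "ev (-4, [LA, LC, LA, LB, LA, LC]) \<in> V"
proof -
  have "ev (mulnf (mulnf (npw xnf Xnf (3)) (-3, [LA, LB, LA])) (npw xnf Xnf (2))) \<in> V" by (rule dc_nf[OF bimodV vf10])
  then show ?thesis by (simp add: nfs)
qed

lemma vf15: "ev (-4, [LA, LC, LA, LB, LA, LB, LA]) \<in> V"
proof -
  have "ev (mulnf (mulnf (npw xnf Xnf (-3)) (-1, [LA, LB])) (npw xnf Xnf (0))) \<in> V" by (rule dc_nf[OF bimodV vf4])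
  then show ?thesis by (simp add: nfs)
qed

lemma vf16: "ev (-3, [LA, LB, LA, LB, LA, LB]) \<in> V"
proof -
  have "wv [GY, GY, GY] \<in> V" by (rule bV_ym3)
  then have "ev (wnf [GY, GY, GY]) \<in> V" by (simp only: ev_wnf)
  then show ?thesis by (simp add: nfs)
qed

lemma vf17: "ev (-5, [LA, LC, LA, LB, LA, LB, LA, LC, LA]) \<in> V"
proof -
  have "ev (mulnf (mulnf (npw xnf Xnf (-1)) (-3, [LA, LB, LA, LB, LA, LB])) (npw xnf Xnf (1))) \<in> V" by (rule dc_nf[OF bimodV vf16])
  then show ?thesis by (simp add: nfs)
qed

lemma vf18: "ev (-6, [LC, LA, LC, LA, LC, LA, LB, LA, LB, LA]) \<in> V"
proof -
  have "ev (mulnf (mulnf (npw xnf Xnf (-3)) (-3, [LA, LB, LA, LC, LA, LB])) (npw xnf Xnf (-1))) \<in> V" by (rule dc_nf[OF bimodV vf8])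
  then show ?thesis by (simp add: nfs)
qed

lemma vf19: "ev (-1, [LC, LA]) \<in> V"
proof -
  have "wv [Gy] \<in> V" by (rule bV_y1)
  then have "ev (wnf [Gy]) \<in> V" by (simp only: ev_wnf)
  then show ?thesis by (simp add: nfs)
qed

lemma vf20: "ev (-5, [LB, LA, LB, LA, LC, LA, LB, LA, LB, LA]) \<in> V"
proof -
  have "ev (mulnf (mulnf (npw xnf Xnf (-2)) (-1, [LC, LA])) (npw xnf Xnf (-2))) \<in> V" by (rule dc_nf[OF bimodV vf19])
  then show ?thesis by (simp add: nfs)
qed

lemma vf21: "ev (-3, [LC, LA, LB, LA, LC, LA]) \<in> V"
proof -
  have "wv [Gy, GX, Gy] \<in> V" by (rule bV_yXy)
  then have "ev (wnf [Gy, GX, Gy]) \<in> V" by (simp only: ev_wnf)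
  then show ?thesis by (simp add: nfs)
qed

lemma vf22: "ev (-6, [LB, LA, LC, LA, LB, LA, LC, LA, LB, LA, LB, LA]) \<in> V"
proof -
  have "ev (mulnf (mulnf (npw xnf Xnf (-2)) (-3, [LC, LA, LB, LA, LC, LA])) (npw xnf Xnf (-1))) \<in> V" by (rule dc_nf[OF bimodV vf21])
  then show ?thesis by (simp add: nfs)
qed

lemma vf23: "ev (-7, [LC, LA, LB, LA, LC, LA, LC, LA, LB, LA, LB, LA]) \<in> V"
proof -
  have "ev (mulnf (-4, [LA, LC, LA, LB, LA, LB, LA]) (npw (mulnf (mulnf (-1, [LA, LB]) xnf) (-1, [LC, LA])) (mulnf (mulnf (-1, [LA, LB]) Xnf) (-1, [LC, LA])) (-2))) \<in> V"
    by (rule line_nf[OF smV, where t = "(-1)"]) (simp_all add: nfs vf18 vf15 vf20 vf22)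
  then show ?thesis by (simp add: nfs)
qed

lemma vf24: "ev (-6, [LA, LC, LA, LB, LA, LB, LA, LC, LA, LC, LA]) \<in> V"
proof -
  have "ev (mulnf (mulnf (npw xnf Xnf (2)) (-7, [LC, LA, LB, LA, LC, LA, LC, LA, LB, LA, LB, LA])) (npw xnf Xnf (2))) \<in> V" by (rule dc_nf[OF bimodV vf23])
  then show ?thesis by (simp add: nfs)
qed

lemma vf25: "ev (-5, [LA, LC, LA, LB, LA, LC, LA, LB]) \<in> V"
proof -
  have "ev (mulnf (-4, [LA, LC, LA, LB, LA, LB, LA]) (npw (mulnf (mulnf (-3, [LC, LA, LC, LA, LB, LA]) xnf) (-3, [LA, LC, LA, LB, LA, LB])) (mulnf (mulnf (-3, [LC, LA, LC, LA, LB, LA]) Xnf) (-3, [LA, LC, LA, LB, LA, LB])) (-2))) \<in> V"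
    by (rule line_nf[OF smV, where t = "(-1)"]) (simp_all add: nfs vf14 vf15 vf17 vf24)
  then show ?thesis by (simp add: nfs)
qed

lemma vf26: "ev (-6, [LB, LA, LC, LA, LC, LA, LC, LA]) \<in> V"
proof -
  have "ev (mulnf (mulnf (npw xnf Xnf (-1)) (-5, [LA, LC, LA, LB, LA, LC, LA, LB])) (npw xnf Xnf (-3))) \<in> V" by (rule dc_nf[OF bimodV vf25])
  then show ?thesis by (simp add: nfs)
qed

lemma vf27: "ev (-3, [LC]) \<in> V"
proof -
  have "ev (mulnf (-3, [LB, LA]) (npw (mulnf (mulnf (-1, [LA, LB]) xnf) (-1, [LC, LA])) (mulnf (mulnf (-1, [LA, LB]) Xnf) (-1, [LC, LA])) (-1))) \<in> V"
    by (rule line_nf[OF smV, where t = "(0)"]) (simp_all add: nfs vf1 vf11 vf13 vf26)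
  then show ?thesis by (simp add: nfs)
qed

lemma vf28: "ev (-4, [LC, LA, LC]) \<in> V"
proof -
  have "ev (mulnf (mulnf (npw xnf Xnf (1)) (-3, [LC])) (npw xnf Xnf (0))) \<in> V" by (rule dc_nf[OF bimodV vf27])
  then show ?thesis by (simp add: nfs)
qed

lemma vf29: "ev (-2, []) \<in> V"
proof -
  have "ev (mulnf (mulnf (npw xnf Xnf (-4)) (-6, [LA, LC, LA, LC, LA, LC, LA, LC])) (npw xnf Xnf (0))) \<in> V" by (rule dc_nf[OF bimodV vf0])
  then show ?thesis by (simp add: nfs)
qed

lemma vf30: "ev (-3, [LB, LA, LB]) \<in> V"
proof -
  have "ev (mulnf (mulnf (npw xnf Xnf (1)) (-3, [LA, LB, LA])) (npw xnf Xnf (-2))) \<in> V" by (rule dc_nf[OF bimodV vf10])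
  then show ?thesis by (simp add: nfs)
qed

lemma vf31: "ev (-4, [LB, LA, LC, LA, LB]) \<in> V"
proof -
  have "ev (mulnf (mulnf (npw xnf Xnf (2)) (-5, [LC, LA, LC, LA, LB, LA])) (npw xnf Xnf (-1))) \<in> V" by (rule dc_nf[OF bimodV vf12])
  then show ?thesis by (simp add: nfs)
qed

lemma vf32: "ev (-6, [LB, LA, LC, LA, LC, LA, LC, LA, LB]) \<in> V"
proof -
  have "ev (mulnf (-2, []) (npw (mulnf (mulnf (-1, [LA, LB]) xnf) (-1, [LC, LA])) (mulnf (mulnf (-1, [LA, LB]) Xnf) (-1, [LC, LA])) (4))) \<in> V"
    by (rule line_nf[OF smV, where t = "(-1)"]) (simp_all add: nfs vf28 vf29 vf30 vf31)
  then show ?thesis by (simp add: nfs)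
qed

lemma vf33: "ev (-6, [LC, LA, LC, LA, LC, LA, LC, LA]) \<in> V"
proof -
  have "ev (mulnf (mulnf (npw xnf Xnf (-1)) (-6, [LB, LA, LC, LA, LC, LA, LC, LA, LB])) (npw xnf Xnf (1))) \<in> V" by (rule dc_nf[OF bimodV vf32])
  then show ?thesis by (simp add: nfs)
qed

lemma vf34: "ev (-4, [LA, LC, LA, LC, LA]) \<in> V"
proof -
  have "ev (mulnf (mulnf (npw xnf Xnf (1)) (-3, [LA, LB, LA])) (npw xnf Xnf (2))) \<in> V" by (rule dc_nf[OF bimodV vf10])
  then show ?thesis by (simp add: nfs)
qed

lemma vf35: "ev (-5, [LB, LA, LB, LA, LC, LA, LC, LA]) \<in> V"
proof -
  have "ev (mulnf (mulnf (npw xnf Xnf (-1)) (-2, [LA, LB, LA, LB])) (npw xnf Xnf (-3))) \<in> V" by (rule dc_nf[OF bimodV vf6])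
  then show ?thesis by (simp add: nfs)
qed

lemma vf36: "ev (-6, [LB, LA, LC, LA, LB, LA, LC, LA, LC, LA]) \<in> V"
proof -
  have "ev (mulnf (mulnf (npw xnf Xnf (2)) (-7, [LC, LA, LB, LA, LC, LA, LC, LA, LB, LA, LB, LA])) (npw xnf Xnf (-1))) \<in> V" by (rule dc_nf[OF bimodV vf23])
  then show ?thesis by (simp add: nfs)
qed

lemma vf37: "ev (-7, [LB, LA, LC, LA, LC, LA, LB, LA, LC, LA, LC, LA]) \<in> V"
proof -
  have "ev (mulnf (-4, [LA, LC, LA, LC, LA]) (npw (mulnf (mulnf (-1, [LA, LB]) xnf) (-1, [LC, LA])) (mulnf (mulnf (-1, [LA, LB]) Xnf) (-1, [LC, LA])) (3))) \<in> V"
    by (rule line_nf[OF smV, where t = "(-1)"]) (simp_all add: nfs vf33 vf34 vf35 vf36)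
  then show ?thesis by (simp add: nfs)
qed

lemma vf38: "ev (-7, [LC, LA, LC, LA, LB, LA, LC, LA, LC, LA, LB, LA]) \<in> V"
proof -
  have "ev (mulnf (mulnf (npw xnf Xnf (-1)) (-7, [LB, LA, LC, LA, LC, LA, LB, LA, LC, LA, LC, LA])) (npw xnf Xnf (1))) \<in> V" by (rule dc_nf[OF bimodV vf37])
  then show ?thesis by (simp add: nfs)
qed

lemma vf39: "ev (-5, [LA, LB, LA, LC, LA, LB, LA]) \<in> V"
proof -
  have "ev (mulnf (mulnf (npw xnf Xnf (0)) (-5, [LC, LA, LC, LA, LB, LA])) (npw xnf Xnf (1))) \<in> V" by (rule dc_nf[OF bimodV vf12])
  then show ?thesis by (simp add: nfs)
qed

lemma vf40: "ev (-4, [LA, LC, LA, LB, LA]) \<in> V"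
proof -
  have "ev (mulnf (mulnf (npw xnf Xnf (0)) (-3, [LA, LB, LA])) (npw xnf Xnf (1))) \<in> V" by (rule dc_nf[OF bimodV vf10])
  then show ?thesis by (simp add: nfs)
qed

lemma vf41: "ev (-3, [LB, LA, LB, LA]) \<in> V"
proof -
  have "ev (mulnf (mulnf (npw xnf Xnf (-4)) (-3, [LA, LC, LA, LC])) (npw xnf Xnf (0))) \<in> V" by (rule dc_nf[OF bimodV vf2])
  then show ?thesis by (simp add: nfs)
qed

lemma vf42: "ev (-4, [LC, LA, LB, LA, LB, LA]) \<in> V"
proof -
  have "ev (mulnf (mulnf (npw xnf Xnf (-4)) (-1, [LA, LB])) (npw xnf Xnf (-2))) \<in> V" by (rule dc_nf[OF bimodV vf4])
  then show ?thesis by (simp add: nfs)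
qed

lemma vf43: "ev (-7, [LC, LA, LC, LA, LC, LA, LC, LA, LB, LA, LB, LA]) \<in> V"
proof -
  have "ev (mulnf (-5, [LC, LA, LC, LA, LB, LA, LB, LA]) (npw (mulnf (mulnf (-2, [LA, LC, LA]) xnf) (-1, [LA, LB, LA])) (mulnf (mulnf (-2, [LA, LC, LA]) Xnf) (-1, [LA, LB, LA])) (2))) \<in> V"
    by (rule line_nf[OF smV, where t = "(-4)"]) (simp_all add: nfs vf39 vf40 vf41 vf42)
  then show ?thesis by (simp add: nfs)
qed

lemma vf44: "ev (-6, [LC, LA, LC, LA, LC, LA, LC, LA, LB, LA]) \<in> V"
proof -
  have "ev (mulnf (mulnf (npw xnf Xnf (1)) (-7, [LC, LA, LC, LA, LC, LA, LC, LA, LB, LA, LB, LA])) (npw xnf Xnf (0))) \<in> V" by (rule dc_nf[OF bimodV vf43])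
  then show ?thesis by (simp add: nfs)
qed

lemma vf45: "ev (0, []) \<in> V"
proof -
  have "wv [] \<in> V" by (rule bV_y0)
  then have "ev (wnf []) \<in> V" by (simp only: ev_wnf)
  then show ?thesis by (simp add: nfs)
qed

lemma vf46: "ev (-2, [LB, LA, LB, LA]) \<in> V"
proof -
  have "ev (mulnf (mulnf (npw xnf Xnf (-4)) (0, [])) (npw xnf Xnf (2))) \<in> V" by (rule dc_nf[OF bimodV vf45])
  then show ?thesis by (simp add: nfs)
qed

lemma vf47: "ev (-6, [LC, LA, LB, LA, LC, LA, LB, LA, LB, LA, LB, LA]) \<in> V"
proof -
  have "ev (mulnf (mulnf (npw xnf Xnf (-3)) (-3, [LC, LA, LB, LA, LC, LA])) (npw xnf Xnf (0))) \<in> V" by (rule dc_nf[OF bimodV vf21])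
  then show ?thesis by (simp add: nfs)
qed

lemma vf48: "ev (-2, [LC, LA, LC, LA]) \<in> V"
proof -
  have "wv [Gy, Gy] \<in> V" by (rule bV_y2)
  then have "ev (wnf [Gy, Gy]) \<in> V" by (simp only: ev_wnf)
  then show ?thesis by (simp add: nfs)
qed

lemma vf49: "ev (-5, [LC, LA, LC, LA, LB, LA, LB, LA, LB, LA]) \<in> V"
proof -
  have "ev (mulnf (mulnf (npw xnf Xnf (-3)) (-2, [LC, LA, LC, LA])) (npw xnf Xnf (0))) \<in> V" by (rule dc_nf[OF bimodV vf48])
  then show ?thesis by (simp add: nfs)
qed

lemma vf50: "ev (-3, [LA, LB, LA, LB, LA, LB, LA]) \<in> V"
proof -
  have "ev (mulnf (mulnf (npw xnf Xnf (-2)) (-1, [LC, LA])) (npw xnf Xnf (1))) \<in> V" by (rule dc_nf[OF bimodV vf19])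
  then show ?thesis by (simp add: nfs)
qed

lemma vf51: "ev (-1, [LB, LA, LB, LA]) \<in> V"
proof -
  have "wv [Gy, Gx, Gx, Gy] \<in> V" by (rule bV_om)
  then have "ev (wnf [Gy, Gx, Gx, Gy]) \<in> V" by (simp only: ev_wnf)
  then show ?thesis by (simp add: nfs)
qed

lemma vf52: "ev (-4, [LB, LA, LB, LA, LB, LA, LB, LA, LB, LA]) \<in> V"
proof -
  have "ev (mulnf (mulnf (npw xnf Xnf (-4)) (-1, [LB, LA, LB, LA])) (npw xnf Xnf (1))) \<in> V" by (rule dc_nf[OF bimodV vf51])
  then show ?thesis by (simp add: nfs)
qed

lemma vf53: "ev (-7, [LC, LA, LB, LA, LB, LA, LC, LA, LB, LA, LB, LA, LB, LA]) \<in> V"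
proof -
  have "ev (mulnf (-3, [LA, LB, LA, LB, LA, LB, LA]) (npw (mulnf (mulnf (-1, [LA, LB]) xnf) (-1, [LC, LA])) (mulnf (mulnf (-1, [LA, LB]) Xnf) (-1, [LC, LA])) (-3))) \<in> V"
    by (rule line_nf[OF smV, where t = "(-2)"]) (simp_all add: nfs vf47 vf49 vf50 vf52)
  then show ?thesis by (simp add: nfs)
qed

lemma vf54: "ev (-5, [LC, LA, LB, LA, LB, LA, LC, LA, LB, LA]) \<in> V"
proof -
  have "ev (mulnf (mulnf (npw xnf Xnf (2)) (-7, [LC, LA, LB, LA, LB, LA, LC, LA, LB, LA, LB, LA, LB, LA])) (npw xnf Xnf (0))) \<in> V" by (rule dc_nf[OF bimodV vf53])
  then show ?thesis by (simp add: nfs)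
qed

lemma vf55: "ev (-6, [LC, LA, LB, LA, LC, LA, LB, LA, LC, LA, LB, LA]) \<in> V"
proof -
  have "ev (mulnf (-6, [LC, LA, LC, LA, LC, LA, LC, LA, LB, LA]) (npw (mulnf (mulnf (-2, [LA, LB, LA, LB]) xnf) (-2, [LC, LA, LC, LA])) (mulnf (mulnf (-2, [LA, LB, LA, LB]) Xnf) (-2, [LC, LA, LC, LA])) (3))) \<in> V"
    by (rule line_nf[OF smV, where t = "(-1)"]) (simp_all add: nfs vf38 vf44 vf46 vf54)
  then show ?thesis by (simp add: nfs)
qed

lemma vf56: "ev (-5, [LC, LA, LB, LA, LC, LA, LB, LA, LC, LA]) \<in> V"
proof -
  have "ev (mulnf (mulnf (npw xnf Xnf (1)) (-6, [LC, LA, LB, LA, LC, LA, LB, LA, LC, LA, LB, LA])) (npw xnf Xnf (0))) \<in> V" by (rule dc_nf[OF bimodV vf55])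
  then show ?thesis by (simp add: nfs)
qed

lemma vf57: "ev (-2, [LC, LA]) \<in> V"
proof -
  have "ev (mulnf (mulnf (npw xnf Xnf (-2)) (-1, [LA, LB])) (npw xnf Xnf (-2))) \<in> V" by (rule dc_nf[OF bimodV vf4])
  then show ?thesis by (simp add: nfs)
qed

lemma vf58: "ev (-6, [LB, LA, LC, LA, LB, LA, LB, LA, LB, LA, LB, LA]) \<in> V"
proof -
  have "ev (mulnf (mulnf (npw xnf Xnf (-4)) (-1, [LC, LA])) (npw xnf Xnf (-1))) \<in> V" by (rule dc_nf[OF bimodV vf19])
  then show ?thesis by (simp add: nfs)
qed

lemma vf59: "ev (-7, [LB, LA, LC, LA, LB, LA, LC, LA, LB, LA, LB, LA, LB, LA]) \<in> V"
proof -
  have "ev (mulnf (mulnf (npw xnf Xnf (-3)) (-3, [LC, LA, LB, LA, LC, LA])) (npw xnf Xnf (-1))) \<in> V" by (rule dc_nf[OF bimodV vf21])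
  then show ?thesis by (simp add: nfs)
qed

lemma vf60: "ev (-8, [LB, LA, LC, LA, LB, LA, LC, LA, LC, LA, LB, LA, LB, LA, LB, LA]) \<in> V"
proof -
  have "ev (mulnf (-2, [LC, LA]) (npw (mulnf (mulnf (-3, [LA, LB, LA, LB, LA, LC]) xnf) (-3, [LB, LA, LC, LA, LC, LA])) (mulnf (mulnf (-3, [LA, LB, LA, LB, LA, LC]) Xnf) (-3, [LB, LA, LC, LA, LC, LA])) (3))) \<in> V"
    by (rule line_nf[OF smV, where t = "(-1)"]) (simp_all add: nfs vf9 vf57 vf58 vf59)
  then show ?thesis by (simp add: nfs)
qed

lemma vf61: "ev (-4, [LC, LA, LB, LA, LC, LA, LC, LA]) \<in> V"
proof -
  have "ev (mulnf (mulnf (npw xnf Xnf (3)) (-8, [LB, LA, LC, LA, LB, LA, LC, LA, LC, LA, LB, LA, LB, LA, LB, LA])) (npw xnf Xnf (1))) \<in> V" by (rule dc_nf[OF bimodV vf60])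
  then show ?thesis by (simp add: nfs)
qed

lemma vf62: "ev (-1, [LC, LA, LB]) \<in> V"
proof -
  have "ev (mulnf (mulnf (npw xnf Xnf (1)) (-2, [LC, LA, LC, LA])) (npw xnf Xnf (0))) \<in> V" by (rule dc_nf[OF bimodV vf48])
  then show ?thesis by (simp add: nfs)
qed

lemma vf63: "ev (-7, [LC, LA, LB, LA, LC, LA, LB, LA, LB, LA, LB, LA, LB, LA]) \<in> V"
proof -
  have "ev (mulnf (mulnf (npw xnf Xnf (-4)) (-3, [LC, LA, LB, LA, LC, LA])) (npw xnf Xnf (0))) \<in> V" by (rule dc_nf[OF bimodV vf21])
  then show ?thesis by (simp add: nfs)
qed

lemma vf64: "ev (-6, [LC, LA, LC, LA, LB, LA, LB, LA, LB, LA, LB, LA]) \<in> V"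
proof -
  have "ev (mulnf (mulnf (npw xnf Xnf (-4)) (-2, [LC, LA, LC, LA])) (npw xnf Xnf (0))) \<in> V" by (rule dc_nf[OF bimodV vf48])
  then show ?thesis by (simp add: nfs)
qed

lemma vf65: "ev (-4, [LA, LB, LA, LB, LA, LB, LA, LB, LA]) \<in> V"
proof -
  have "ev (mulnf (mulnf (npw xnf Xnf (-3)) (-1, [LC, LA])) (npw xnf Xnf (1))) \<in> V" by (rule dc_nf[OF bimodV vf19])
  then show ?thesis by (simp add: nfs)
qed

lemma vf66: "ev (-5, [LB, LA, LB, LA, LB, LA, LB, LA, LB, LA, LB, LA]) \<in> V"
proof -
  have "ev (mulnf (mulnf (npw xnf Xnf (-4)) (-1, [LB, LA, LB, LA])) (npw xnf Xnf (0))) \<in> V" by (rule dc_nf[OF bimodV vf51])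
  then show ?thesis by (simp add: nfs)
qed

lemma vf67: "ev (-6, [LB, LA, LC, LA, LB, LA, LB, LA, LB, LA, LB, LA, LB, LA]) \<in> V"
proof -
  have "ev (mulnf (-4, [LA, LB, LA, LB, LA, LB, LA, LB, LA]) (npw (mulnf (mulnf (-1, [LA, LB]) xnf) (-1, [LC, LA])) (mulnf (mulnf (-1, [LA, LB]) Xnf) (-1, [LC, LA])) (2))) \<in> V"
    by (rule line_nf[OF smV, where t = "(-2)"]) (simp_all add: nfs vf63 vf64 vf65 vf66)
  then show ?thesis by (simp add: nfs)
qed

lemma vf68: "ev (-3, [LC, LA, LB, LA, LB, LA, LB, LA]) \<in> V"
proof -
  have "ev (mulnf (mulnf (npw xnf Xnf (2)) (-6, [LB, LA, LC, LA, LB, LA, LB, LA, LB, LA, LB, LA, LB, LA])) (npw xnf Xnf (1))) \<in> V" by (rule dc_nf[OF bimodV vf67])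
  then show ?thesis by (simp add: nfs)
qed

lemma vf69: "ev (-5, [LA, LB, LA, LC, LA, LC, LA, LC, LA]) \<in> V"
proof -
  have "ev (mulnf (mulnf (npw xnf Xnf (2)) (-7, [LC, LA, LC, LA, LC, LA, LC, LA, LB, LA, LB, LA])) (npw xnf Xnf (1))) \<in> V" by (rule dc_nf[OF bimodV vf43])
  then show ?thesis by (simp add: nfs)
qed

lemma vf70: "ev (-2, [LA, LB, LA, LC]) \<in> V"
proof -
  have "ev (mulnf (mulnf (npw xnf Xnf (1)) (-1, [LA, LB])) (npw xnf Xnf (0))) \<in> V" by (rule dc_nf[OF bimodV vf4])
  then show ?thesis by (simp add: nfs)
qed

lemma vf71: "ev (-4, [LA, LB, LA, LC, LA, LB, LA, LB, LA]) \<in> V"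
proof -
  have "ev (mulnf (mulnf (npw xnf Xnf (-2)) (-2, [LC, LA, LC, LA])) (npw xnf Xnf (1))) \<in> V" by (rule dc_nf[OF bimodV vf48])
  then show ?thesis by (simp add: nfs)
qed

lemma vf72: "ev (-7, [LC, LA, LC, LA, LC, LA, LB, LA, LB, LA, LB, LA]) \<in> V"
proof -
  have "ev (mulnf (mulnf (npw xnf Xnf (-4)) (-3, [LA, LB, LA, LC, LA, LB])) (npw xnf Xnf (-1))) \<in> V" by (rule dc_nf[OF bimodV vf8])
  then show ?thesis by (simp add: nfs)
qed

lemma vf73: "ev (-5, [LA, LC, LA, LB, LA, LB, LA, LB, LA]) \<in> V"
proof -
  have "ev (mulnf (mulnf (npw xnf Xnf (-4)) (-1, [LA, LB])) (npw xnf Xnf (0))) \<in> V" by (rule dc_nf[OF bimodV vf4])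
  then show ?thesis by (simp add: nfs)
qed

lemma vf74: "ev (-6, [LB, LA, LB, LA, LC, LA, LB, LA, LB, LA, LB, LA]) \<in> V"
proof -
  have "ev (mulnf (mulnf (npw xnf Xnf (-3)) (-1, [LC, LA])) (npw xnf Xnf (-2))) \<in> V" by (rule dc_nf[OF bimodV vf19])
  then show ?thesis by (simp add: nfs)
qed

lemma vf75: "ev (-8, [LB, LA, LC, LA, LC, LA, LB, LA, LC, LA, LB, LA, LB, LA, LB, LA]) \<in> V"
proof -
  have "ev (mulnf (-5, [LA, LC, LA, LB, LA, LB, LA, LB, LA]) (npw (mulnf (mulnf (-1, [LA, LB]) xnf) (-1, [LC, LA])) (mulnf (mulnf (-1, [LA, LB]) Xnf) (-1, [LC, LA])) (3))) \<in> V"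
    by (rule line_nf[OF smV, where t = "(-1)"]) (simp_all add: nfs vf72 vf73 vf74 vf59)
  then show ?thesis by (simp add: nfs)
qed

lemma vf76: "ev (-5, [LA, LB, LA, LC, LA, LB, LA, LC, LA, LB, LA]) \<in> V"
proof -
  have "ev (mulnf (mulnf (npw xnf Xnf (2)) (-8, [LB, LA, LC, LA, LC, LA, LB, LA, LC, LA, LB, LA, LB, LA, LB, LA])) (npw xnf Xnf (2))) \<in> V" by (rule dc_nf[OF bimodV vf75])
  then show ?thesis by (simp add: nfs)
qed

lemma vf77: "ev (-4, [LA, LB, LA, LB, LA, LC, LA, LB]) \<in> V"
proof -
  have "ev (mulnf (mulnf (npw xnf Xnf (3)) (-7, [LC, LA, LB, LA, LC, LA, LC, LA, LB, LA, LB, LA])) (npw xnf Xnf (1))) \<in> V" by (rule dc_nf[OF bimodV vf23])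
  then show ?thesis by (simp add: nfs)
qed

lemma vf78: "ev (-3, [LA, LB, LA, LB, LA, LC]) \<in> V"
proof -
  have "ev (mulnf (mulnf (npw xnf Xnf (1)) (-2, [LA, LB, LA, LB])) (npw xnf Xnf (0))) \<in> V" by (rule dc_nf[OF bimodV vf6])
  then show ?thesis by (simp add: nfs)
qed

lemma vf79: "ev (-4, [LA, LB, LA, LB, LA, LB, LA, LC, LA]) \<in> V"
proof -
  have "ev (mulnf (mulnf (npw xnf Xnf (3)) (-7, [LC, LA, LB, LA, LB, LA, LC, LA, LB, LA, LB, LA, LB, LA])) (npw xnf Xnf (1))) \<in> V" by (rule dc_nf[OF bimodV vf53])
  then show ?thesis by (simp add: nfs)
qed

lemma vf80: "ev (-5, [LA, LB, LA, LB, LA, LB, LA, LC, LA, LC, LA]) \<in> V"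
proof -
  have "ev (mulnf (-3, [LA, LB, LA, LB, LA, LB, LA]) (npw (mulnf (mulnf (-3, [LC, LA, LC, LA, LC, LA]) xnf) (-3, [LA, LB, LA, LB, LA, LB])) (mulnf (mulnf (-3, [LC, LA, LC, LA, LC, LA]) Xnf) (-3, [LA, LB, LA, LB, LA, LB])) (2))) \<in> V"
    by (rule line_nf[OF smV, where t = "(-2)"]) (simp_all add: nfs vf77 vf78 vf50 vf79)
  then show ?thesis by (simp add: nfs)
qed

lemma vf81: "ev (-7, [LC, LA, LB, LA, LB, LA, LC, LA, LC, LA, LB, LA, LB, LA]) \<in> V"
proof -
  have "ev (mulnf (mulnf (npw xnf Xnf (-2)) (-5, [LA, LB, LA, LB, LA, LB, LA, LC, LA, LC, LA])) (npw xnf Xnf (-1))) \<in> V" by (rule dc_nf[OF bimodV vf80])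
  then show ?thesis by (simp add: nfs)
qed

lemma vf82: "ev (-6, [LC, LA, LB, LA, LC, LA, LC, LA, LB, LA, LB, LA]) \<in> V"
proof -
  have "ev (mulnf (mulnf (npw xnf Xnf (1)) (-8, [LB, LA, LC, LA, LB, LA, LC, LA, LC, LA, LB, LA, LB, LA, LB, LA])) (npw xnf Xnf (1))) \<in> V" by (rule dc_nf[OF bimodV vf60])
  then show ?thesis by (simp add: nfs)
qed

lemma vf83: "ev (-3, [LC, LA, LC, LA, LC, LA]) \<in> V"
proof -
  have "wv [Gy, Gy, Gy] \<in> V" by (rule bV_y3)
  then have "ev (wnf [Gy, Gy, Gy]) \<in> V" by (simp only: ev_wnf)
  then show ?thesis by (simp add: nfs)
qed

lemma vf84: "ev (-5, [LC, LA, LC, LA, LC, LA, LB, LA, LB, LA]) \<in> V"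
proof -
  have "ev (mulnf (mulnf (npw xnf Xnf (-2)) (-3, [LC, LA, LC, LA, LC, LA])) (npw xnf Xnf (0))) \<in> V" by (rule dc_nf[OF bimodV vf83])
  then show ?thesis by (simp add: nfs)
qed

lemma vf85: "ev (-3, [LA, LC, LA, LB, LA, LB, LA]) \<in> V"
proof -
  have "ev (mulnf (mulnf (npw xnf Xnf (-1)) (-1, [LC, LA])) (npw xnf Xnf (2))) \<in> V" by (rule dc_nf[OF bimodV vf19])
  then show ?thesis by (simp add: nfs)
qed

lemma vf86: "ev (-8, [LC, LA, LB, LA, LB, LA, LB, LA, LC, LA, LC, LA, LB, LA, LB, LA]) \<in> V"
proof -
  have "ev (mulnf (-3, [LA, LC, LA, LB, LA, LB, LA]) (npw (mulnf (mulnf (-1, [LA, LB]) xnf) (-1, [LC, LA])) (mulnf (mulnf (-1, [LA, LB]) Xnf) (-1, [LC, LA])) (-4))) \<in> V"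
    by (rule line_nf[OF smV, where t = "(-3)"]) (simp_all add: nfs vf81 vf82 vf84 vf85)
  then show ?thesis by (simp add: nfs)
qed

lemma vf87: "ev (-8, [LB, LA, LB, LA, LC, LA, LB, LA, LB, LA, LB, LA, LC, LA, LC, LA]) \<in> V"
proof -
  have "ev (mulnf (mulnf (npw xnf Xnf (2)) (-8, [LC, LA, LB, LA, LB, LA, LB, LA, LC, LA, LC, LA, LB, LA, LB, LA])) (npw xnf Xnf (-2))) \<in> V" by (rule dc_nf[OF bimodV vf86])
  then show ?thesis by (simp add: nfs)
qed

lemma vf88: "ev (-7, [LB, LA, LB, LA, LC, LA, LB, LA, LB, LA, LC, LA, LC, LA]) \<in> V"
proof -
  have "ev (mulnf (mulnf (npw xnf Xnf (0)) (-5, [LA, LB, LA, LB, LA, LB, LA, LC, LA, LC, LA])) (npw xnf Xnf (-3))) \<in> V" by (rule dc_nf[OF bimodV vf80])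
  then show ?thesis by (simp add: nfs)
qed

lemma vf89: "ev (-6, [LB, LA, LB, LA, LC, LA, LB, LA, LC, LA, LC, LA]) \<in> V"
proof -
  have "ev (mulnf (mulnf (npw xnf Xnf (3)) (-8, [LB, LA, LC, LA, LB, LA, LC, LA, LC, LA, LB, LA, LB, LA, LB, LA])) (npw xnf Xnf (-1))) \<in> V" by (rule dc_nf[OF bimodV vf60])
  then show ?thesis by (simp add: nfs)
qed

lemma vf90: "ev (-5, [LB, LA, LB, LA, LC, LA, LC, LA, LC, LA]) \<in> V"
proof -
  have "ev (mulnf (mulnf (npw xnf Xnf (0)) (-3, [LC, LA, LC, LA, LC, LA])) (npw xnf Xnf (-2))) \<in> V" by (rule dc_nf[OF bimodV vf83])
  then show ?thesis by (simp add: nfs)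
qed

lemma vf91: "ev (-4, [LB, LA, LB, LA, LB, LA, LB, LA, LC, LA]) \<in> V"
proof -
  have "ev (mulnf (0, [LB]) (npw (mulnf (mulnf (-3, [LA, LB, LA, LC, LA, LC]) xnf) (-3, [LB, LA, LB, LA, LC, LA])) (mulnf (mulnf (-3, [LA, LB, LA, LC, LA, LC]) Xnf) (-3, [LB, LA, LB, LA, LC, LA])) (1))) \<in> V"
    by (rule line_nf[OF smV, where t = "(-4)"]) (simp_all add: nfs vf87 vf88 vf89 vf90)
  then show ?thesis by (simp add: nfs)
qed

lemma vf92: "ev (-3, [LB, LA, LB, LA, LB, LA, LC, LA]) \<in> V"
proof -
  have "ev (mulnf (mulnf (npw xnf Xnf (0)) (-4, [LB, LA, LB, LA, LB, LA, LB, LA, LC, LA])) (npw xnf Xnf (1))) \<in> V" by (rule dc_nf[OF bimodV vf91])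
  then show ?thesis by (simp add: nfs)
qed

lemma vf93: "ev (-2, [LB, LA, LB, LA, LC, LA]) \<in> V"
proof -
  have "ev (mulnf (mulnf (npw xnf Xnf (0)) (-4, [LB, LA, LB, LA, LB, LA, LB, LA, LC, LA])) (npw xnf Xnf (2))) \<in> V" by (rule dc_nf[OF bimodV vf91])
  then show ?thesis by (simp add: nfs)
qed

lemma vf94: "ev (-1, [LB, LA, LC, LA]) \<in> V"
proof -
  have "ev (mulnf (mulnf (npw xnf Xnf (0)) (-4, [LB, LA, LB, LA, LB, LA, LB, LA, LC, LA])) (npw xnf Xnf (3))) \<in> V" by (rule dc_nf[OF bimodV vf91])
  then show ?thesis by (simp add: nfs)
qed

lemma vf95: "ev (0, [LC, LA]) \<in> V"
proof -
  have "ev (mulnf (mulnf (npw xnf Xnf (0)) (-4, [LB, LA, LB, LA, LB, LA, LB, LA, LC, LA])) (npw xnf Xnf (4))) \<in> V" by (rule dc_nf[OF bimodV vf91])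
  then show ?thesis by (simp add: nfs)
qed

lemma vf96: "ev (-2, [LA, LB, LA]) \<in> V"
proof -
  have "ev (mulnf (mulnf (npw xnf Xnf (-2)) (-1, [LA, LB])) (npw xnf Xnf (-1))) \<in> V" by (rule dc_nf[OF bimodV vf4])
  then show ?thesis by (simp add: nfs)
qed

lemma vf97: "ev (-3, [LA, LC, LA, LB, LA]) \<in> V"
proof -
  have "ev (mulnf (mulnf (npw xnf Xnf (-2)) (-1, [LA, LB])) (npw xnf Xnf (0))) \<in> V" by (rule dc_nf[OF bimodV vf4])
  then show ?thesis by (simp add: nfs)
qed

lemma vf98: "ev (-4, [LA, LC, LA, LC, LA, LB, LA]) \<in> V"
proof -
  have "ev (mulnf (mulnf (npw xnf Xnf (-2)) (-1, [LA, LB])) (npw xnf Xnf (1))) \<in> V" by (rule dc_nf[OF bimodV vf4])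
  then show ?thesis by (simp add: nfs)
qed

lemma vf99: "ev (-5, [LA, LC, LA, LC, LA, LC, LA, LB, LA]) \<in> V"
proof -
  have "ev (mulnf (mulnf (npw xnf Xnf (-2)) (-1, [LA, LB])) (npw xnf Xnf (2))) \<in> V" by (rule dc_nf[OF bimodV vf4])
  then show ?thesis by (simp add: nfs)
qed

lemma vf100: "ev (-5, [LA, LC, LA, LC, LA, LB, LA]) \<in> V"
proof -
  have "ev (mulnf (mulnf (npw xnf Xnf (0)) (-3, [LA, LB, LA])) (npw xnf Xnf (2))) \<in> V" by (rule dc_nf[OF bimodV vf10])
  then show ?thesis by (simp add: nfs)
qed

lemma vf101: "ev (-6, [LA, LC, LA, LC, LA, LC, LA, LB, LA]) \<in> V"
proof -
  have "ev (mulnf (mulnf (npw xnf Xnf (0)) (-3, [LA, LB, LA])) (npw xnf Xnf (3))) \<in> V" by (rule dc_nf[OF bimodV vf10])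
  then show ?thesis by (simp add: nfs)
qed

lemma vf102: "ev (-7, [LA, LC, LA, LC, LA, LC, LA, LC, LA, LB, LA]) \<in> V"
proof -
  have "ev (mulnf (mulnf (npw xnf Xnf (0)) (-3, [LA, LB, LA])) (npw xnf Xnf (4))) \<in> V" by (rule dc_nf[OF bimodV vf10])
  then show ?thesis by (simp add: nfs)
qed

lemma vf103: "ev (-4, [LA, LB, LA, LC, LA, LC, LA]) \<in> V"
proof -
  have "ev (mulnf (mulnf (npw xnf Xnf (-1)) (-3, [LA, LB, LA, LC, LA, LB])) (npw xnf Xnf (0))) \<in> V" by (rule dc_nf[OF bimodV vf8])
  then show ?thesis by (simp add: nfs)
qed

lemma vf104: "ev (-3, [LA, LC, LA, LC, LA]) \<in> V"
proof -
  have "ev (mulnf (mulnf (npw xnf Xnf (-1)) (-1, [LA, LB])) (npw xnf Xnf (1))) \<in> V" by (rule dc_nf[OF bimodV vf4])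
  then show ?thesis by (simp add: nfs)
qed

lemma vf105: "ev (-2, [LB, LA, LC, LA]) \<in> V"
proof -
  have "ev (mulnf (mulnf (npw xnf Xnf (0)) (-1, [LC, LA])) (npw xnf Xnf (-1))) \<in> V" by (rule dc_nf[OF bimodV vf19])
  then show ?thesis by (simp add: nfs)
qed

lemma vf106: "ev (-2, [LA, LB, LA, LB, LA]) \<in> V"
proof -
  have "ev (mulnf (mulnf (npw xnf Xnf (-1)) (-1, [LC, LA])) (npw xnf Xnf (1))) \<in> V" by (rule dc_nf[OF bimodV vf19])
  then show ?thesis by (simp add: nfs)
qed

lemma vf107: "ev (-1, [LA, LB, LA]) \<in> V"
proof -
  have "ev (mulnf (mulnf (npw xnf Xnf (0)) (-1, [LC, LA])) (npw xnf Xnf (1))) \<in> V" by (rule dc_nf[OF bimodV vf19])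
  then show ?thesis by (simp add: nfs)
qed

lemma vf108: "ev (0, [LA]) \<in> V"
proof -
  have "ev (mulnf (mulnf (npw xnf Xnf (1)) (-1, [LC, LA])) (npw xnf Xnf (1))) \<in> V" by (rule dc_nf[OF bimodV vf19])
  then show ?thesis by (simp add: nfs)
qed

lemma vf109: "ev (-4, [LA, LB, LA, LB, LA, LC, LA, LB, LA]) \<in> V"
proof -
  have "ev (mulnf (mulnf (npw xnf Xnf (-1)) (-3, [LC, LA, LB, LA, LC, LA])) (npw xnf Xnf (1))) \<in> V" by (rule dc_nf[OF bimodV vf21])
  then show ?thesis by (simp add: nfs)
qed

lemma vf110: "ev (-3, [LA, LB, LA, LC, LA, LB, LA]) \<in> V"
proof -
  have "ev (mulnf (mulnf (npw xnf Xnf (-1)) (-2, [LC, LA, LC, LA])) (npw xnf Xnf (1))) \<in> V" by (rule dc_nf[OF bimodV vf48])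
  then show ?thesis by (simp add: nfs)
qed

lemma vf111: "ev (-2, [LA, LC, LA, LB, LA]) \<in> V"
proof -
  have "ev (mulnf (mulnf (npw xnf Xnf (0)) (-1, [LC, LA])) (npw xnf Xnf (2))) \<in> V" by (rule dc_nf[OF bimodV vf19])
  then show ?thesis by (simp add: nfs)
qed

lemma uf0: "ev (-4, [LC, LA, LB, LA, LB, LA, LC, LA]) \<in> U"
proof -
  have "wv [Gy, GX, GX, Gy] \<in> U" by (rule bU_yXXy)
  then have "ev (wnf [Gy, GX, GX, Gy]) \<in> U" by (simp only: ev_wnf)
  then show ?thesis by (simp add: nfs)
qed

lemma uf1: "ev (-7, [LC, LA, LB, LA, LB, LA, LC, LA, LB, LA, LB, LA, LB, LA]) \<in> U"
proof -
  have "ev (mulnf (mulnf (npw xnf Xnf (-3)) (-4, [LC, LA, LB, LA, LB, LA, LC, LA])) (npw xnf Xnf (0))) \<in> U" by (rule dc_nf[OF bimodU uf0])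
  then show ?thesis by (simp add: nfs)
qed

lemma uf2: "ev (-3, [LC, LA, LB, LA, LC, LA]) \<in> U"
proof -
  have "wv [Gy, GX, Gy] \<in> U" by (rule bU_yXy)
  then have "ev (wnf [Gy, GX, Gy]) \<in> U" by (simp only: ev_wnf)
  then show ?thesis by (simp add: nfs)
qed

lemma uf3: "ev (-6, [LC, LA, LB, LA, LC, LA, LB, LA, LB, LA, LB, LA]) \<in> U"
proof -
  have "ev (mulnf (mulnf (npw xnf Xnf (-3)) (-3, [LC, LA, LB, LA, LC, LA])) (npw xnf Xnf (0))) \<in> U" by (rule dc_nf[OF bimodU uf2])
  then show ?thesis by (simp add: nfs)
qed

lemma uf4: "ev (-2, [LC, LA, LC, LA]) \<in> U"
proof -
  have "wv [Gy, Gy] \<in> U" by (rule bU_y2)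
  then have "ev (wnf [Gy, Gy]) \<in> U" by (simp only: ev_wnf)
  then show ?thesis by (simp add: nfs)
qed

lemma uf5: "ev (-5, [LC, LA, LC, LA, LB, LA, LB, LA, LB, LA]) \<in> U"
proof -
  have "ev (mulnf (mulnf (npw xnf Xnf (-3)) (-2, [LC, LA, LC, LA])) (npw xnf Xnf (0))) \<in> U" by (rule dc_nf[OF bimodU uf4])
  then show ?thesis by (simp add: nfs)
qed

lemma uf6: "ev (-1, [LC, LA]) \<in> U"
proof -
  have "wv [Gy] \<in> U" by (rule bU_y1)
  then have "ev (wnf [Gy]) \<in> U" by (simp only: ev_wnf)
  then show ?thesis by (simp add: nfs)
qed

lemma uf7: "ev (-3, [LA, LB, LA, LB, LA, LB, LA]) \<in> U"
proof -
  have "ev (mulnf (mulnf (npw xnf Xnf (-2)) (-1, [LC, LA])) (npw xnf Xnf (1))) \<in> U" by (rule dc_nf[OF bimodU uf6])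
  then show ?thesis by (simp add: nfs)
qed

lemma uf8: "ev (-4, [LB, LA, LB, LA, LB, LA, LB, LA, LB, LA]) \<in> U"
proof -
  have "ev (mulnf (-3, [LA, LB, LA, LB, LA, LB, LA]) (npw (mulnf (mulnf (-1, [LA, LB]) xnf) (-1, [LC, LA])) (mulnf (mulnf (-1, [LA, LB]) Xnf) (-1, [LC, LA])) (1))) \<in> U"
    by (rule line_nf[OF smU, where t = "(-3)"]) (simp_all add: nfs uf1 uf3 uf5 uf7)
  then show ?thesis by (simp add: nfs)
qed

lemma uf9: "ev (-1, [LB, LA, LB, LA]) \<in> U"
proof -
  have "ev (mulnf (mulnf (npw xnf Xnf (-1)) (-4, [LB, LA, LB, LA, LB, LA, LB, LA, LB, LA])) (npw xnf Xnf (4))) \<in> U" by (rule dc_nf[OF bimodU uf8])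
  then show ?thesis by (simp add: nfs)
qed

lemma uf10: "ev (-3, [LA, LC, LA, LC]) \<in> U"
proof -
  have "wv [GY, GX, GX, GY] \<in> U" by (rule bU_omi)
  then have "ev (wnf [GY, GX, GX, GY]) \<in> U" by (simp only: ev_wnf)
  then show ?thesis by (simp add: nfs)
qed

lemma uf11: "ev (-4, [LB, LA, LB, LA, LB, LA]) \<in> U"
proof -
  have "ev (mulnf (mulnf (npw xnf Xnf (-4)) (-3, [LA, LC, LA, LC])) (npw xnf Xnf (-1))) \<in> U" by (rule dc_nf[OF bimodU uf10])
  then show ?thesis by (simp add: nfs)
qed

lemma uf12: "ev (-1, [LA, LB]) \<in> U"
proof -
  have "wv [GY] \<in> U" by (rule bU_ym1)
  then have "ev (wnf [GY]) \<in> U" by (simp only: ev_wnf)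
  then show ?thesis by (simp add: nfs)
qed

lemma uf13: "ev (-5, [LB, LA, LC, LA, LB, LA, LB, LA]) \<in> U"
proof -
  have "ev (mulnf (mulnf (npw xnf Xnf (-4)) (-1, [LA, LB])) (npw xnf Xnf (-3))) \<in> U" by (rule dc_nf[OF bimodU uf12])
  then show ?thesis by (simp add: nfs)
qed

lemma uf14: "ev (-2, [LA, LB, LA, LB]) \<in> U"
proof -
  have "wv [GY, GY] \<in> U" by (rule bU_ym2)
  then have "ev (wnf [GY, GY]) \<in> U" by (simp only: ev_wnf)
  then show ?thesis by (simp add: nfs)
qed

lemma uf15: "ev (-6, [LB, LA, LC, LA, LC, LA, LB, LA, LB, LA]) \<in> U"
proof -
  have "ev (mulnf (mulnf (npw xnf Xnf (-3)) (-2, [LA, LB, LA, LB])) (npw xnf Xnf (-2))) \<in> U" by (rule dc_nf[OF bimodU uf14])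
  then show ?thesis by (simp add: nfs)
qed

lemma uf16: "ev (-3, [LA, LB, LA, LC, LA, LB]) \<in> U"
proof -
  have "wv [GY, Gx, GY] \<in> U" by (rule bU_YxY)
  then have "ev (wnf [GY, Gx, GY]) \<in> U" by (simp only: ev_wnf)
  then show ?thesis by (simp add: nfs)
qed

lemma uf17: "ev (-7, [LB, LA, LC, LA, LC, LA, LC, LA, LB, LA, LB, LA]) \<in> U"
proof -
  have "ev (mulnf (mulnf (npw xnf Xnf (-3)) (-3, [LA, LB, LA, LC, LA, LB])) (npw xnf Xnf (-2))) \<in> U" by (rule dc_nf[OF bimodU uf16])
  then show ?thesis by (simp add: nfs)
qed

lemma uf18: "ev (-3, [LA, LB, LA]) \<in> U"
proof -
  have "ev (mulnf (-6, [LB, LA, LC, LA, LC, LA, LB, LA, LB, LA]) (npw (mulnf (mulnf (-1, [LA, LB]) xnf) (-1, [LC, LA])) (mulnf (mulnf (-1, [LA, LB]) Xnf) (-1, [LC, LA])) (-3))) \<in> U"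
    by (rule line_nf[OF smU, where t = "(-2)"]) (simp_all add: nfs uf11 uf13 uf15 uf17)
  then show ?thesis by (simp add: nfs)
qed

lemma uf19: "ev (-3, [LC, LA]) \<in> U"
proof -
  have "ev (mulnf (mulnf (npw xnf Xnf (0)) (-3, [LA, LB, LA])) (npw xnf Xnf (-1))) \<in> U" by (rule dc_nf[OF bimodU uf18])
  then show ?thesis by (simp add: nfs)
qed

lemma uf20: "ev (-5, [LC, LA, LC, LA, LB, LA]) \<in> U"
proof -
  have "ev (mulnf (-6, [LB, LA, LC, LA, LC, LA, LB, LA, LB, LA]) (npw (mulnf (mulnf (-1, [LA, LB]) xnf) (-1, [LC, LA])) (mulnf (mulnf (-1, [LA, LB]) Xnf) (-1, [LC, LA])) (-4))) \<in> U"
    by (rule line_nf[OF smU, where t = "(-2)"]) (simp_all add: nfs uf11 uf13 uf15 uf17)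
  then show ?thesis by (simp add: nfs)
qed

lemma uf21: "ev (-4, [LC, LA, LC, LA]) \<in> U"
proof -
  have "ev (mulnf (mulnf (npw xnf Xnf (1)) (-5, [LC, LA, LC, LA, LB, LA])) (npw xnf Xnf (0))) \<in> U" by (rule dc_nf[OF bimodU uf20])
  then show ?thesis by (simp add: nfs)
qed

lemma uf22: "ev (-4, [LA, LC, LA, LB, LA, LC]) \<in> U"
proof -
  have "ev (mulnf (mulnf (npw xnf Xnf (3)) (-3, [LA, LB, LA])) (npw xnf Xnf (2))) \<in> U" by (rule dc_nf[OF bimodU uf18])
  then show ?thesis by (simp add: nfs)
qed

lemma uf23: "ev (-4, [LA, LC, LA, LB, LA, LB, LA]) \<in> U"
proof -
  have "ev (mulnf (mulnf (npw xnf Xnf (-3)) (-1, [LA, LB])) (npw xnf Xnf (0))) \<in> U" by (rule dc_nf[OF bimodU uf12])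
  then show ?thesis by (simp add: nfs)
qed

lemma uf24: "ev (-3, [LA, LB, LA, LB, LA, LB]) \<in> U"
proof -
  have "wv [GY, GY, GY] \<in> U" by (rule bU_ym3)
  then have "ev (wnf [GY, GY, GY]) \<in> U" by (simp only: ev_wnf)
  then show ?thesis by (simp add: nfs)
qed

lemma uf25: "ev (-5, [LA, LC, LA, LB, LA, LB, LA, LC, LA]) \<in> U"
proof -
  have "ev (mulnf (mulnf (npw xnf Xnf (-1)) (-3, [LA, LB, LA, LB, LA, LB])) (npw xnf Xnf (1))) \<in> U" by (rule dc_nf[OF bimodU uf24])
  then show ?thesis by (simp add: nfs)
qed

lemma uf26: "ev (-6, [LC, LA, LC, LA, LC, LA, LB, LA, LB, LA]) \<in> U"
proof -
  have "ev (mulnf (mulnf (npw xnf Xnf (-3)) (-3, [LA, LB, LA, LC, LA, LB])) (npw xnf Xnf (-1))) \<in> U" by (rule dc_nf[OF bimodU uf16])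
  then show ?thesis by (simp add: nfs)
qed

lemma uf27: "ev (-5, [LB, LA, LB, LA, LC, LA, LB, LA, LB, LA]) \<in> U"
proof -
  have "ev (mulnf (mulnf (npw xnf Xnf (-2)) (-1, [LC, LA])) (npw xnf Xnf (-2))) \<in> U" by (rule dc_nf[OF bimodU uf6])
  then show ?thesis by (simp add: nfs)
qed

lemma uf28: "ev (-6, [LB, LA, LC, LA, LB, LA, LC, LA, LB, LA, LB, LA]) \<in> U"
proof -
  have "ev (mulnf (mulnf (npw xnf Xnf (-2)) (-3, [LC, LA, LB, LA, LC, LA])) (npw xnf Xnf (-1))) \<in> U" by (rule dc_nf[OF bimodU uf2])
  then show ?thesis by (simp add: nfs)
qed

lemma uf29: "ev (-7, [LC, LA, LB, LA, LC, LA, LC, LA, LB, LA, LB, LA]) \<in> U"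
proof -
  have "ev (mulnf (-4, [LA, LC, LA, LB, LA, LB, LA]) (npw (mulnf (mulnf (-1, [LA, LB]) xnf) (-1, [LC, LA])) (mulnf (mulnf (-1, [LA, LB]) Xnf) (-1, [LC, LA])) (-2))) \<in> U"
    by (rule line_nf[OF smU, where t = "(-1)"]) (simp_all add: nfs uf26 uf23 uf27 uf28)
  then show ?thesis by (simp add: nfs)
qed

lemma uf30: "ev (-6, [LA, LC, LA, LB, LA, LB, LA, LC, LA, LC, LA]) \<in> U"
proof -
  have "ev (mulnf (mulnf (npw xnf Xnf (2)) (-7, [LC, LA, LB, LA, LC, LA, LC, LA, LB, LA, LB, LA])) (npw xnf Xnf (2))) \<in> U" by (rule dc_nf[OF bimodU uf29])
  then show ?thesis by (simp add: nfs)
qed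

lemma uf31: "ev (-5, [LA, LC, LA, LB, LA, LC, LA, LB]) \<in> U"
proof -
  have "ev (mulnf (-4, [LA, LC, LA, LB, LA, LB, LA]) (npw (mulnf (mulnf (-3, [LC, LA, LC, LA, LB, LA]) xnf) (-3, [LA, LC, LA, LB, LA, LB])) (mulnf (mulnf (-3, [LC, LA, LC, LA, LB, LA]) Xnf) (-3, [LA, LC, LA, LB, LA, LB])) (-2))) \<in> U"
    by (rule line_nf[OF smU, where t = "(-1)"]) (simp_all add: nfs uf22 uf23 uf25 uf30)
  then show ?thesis by (simp add: nfs)
qed

lemma uf32: "ev (-5, [LC, LA, LC, LA, LC, LA]) \<in> U"
proof -
  have "ev (mulnf (mulnf (npw xnf Xnf (-1)) (-5, [LA, LC, LA, LB, LA, LC, LA, LB])) (npw xnf Xnf (-2))) \<in> U" by (rule dc_nf[OF bimodU uf31])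
  then show ?thesis by (simp add: nfs)
qed

lemma uf33: "ev (-5, [LA, LB, LA, LC, LA, LC, LA, LB]) \<in> U"
proof -
  have "wv [GY, GY, GX, GX, GY, GY] \<in> U" by (rule bU_YYXXYY)
  then have "ev (wnf [GY, GY, GX, GX, GY, GY]) \<in> U" by (simp only: ev_wnf)
  then show ?thesis by (simp add: nfs)
qed

lemma uf34: "ev (-6, [LC, LA, LC, LA, LC, LA, LC, LA]) \<in> U"
proof -
  have "ev (mulnf (mulnf (npw xnf Xnf (-1)) (-5, [LA, LB, LA, LC, LA, LC, LA, LB])) (npw xnf Xnf (-1))) \<in> U" by (rule dc_nf[OF bimodU uf33])
  then show ?thesis by (simp add: nfs)
qed

lemma uf35: "ev (-2, []) \<in> U"
proof -
  have "ev (mulnf (-6, [LC, LA, LC, LA, LC, LA, LC, LA]) (npw (mulnf (mulnf (-2, [LA, LC, LA]) xnf) (-1, [LA, LB, LA])) (mulnf (mulnf (-2, [LA, LC, LA]) Xnf) (-1, [LA, LB, LA])) (-4))) \<in> U"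
    by (rule line_nf[OF smU, where t = "(-3)"]) (simp_all add: nfs uf19 uf21 uf32 uf34)
  then show ?thesis by (simp add: nfs)
qed

lemma uf36: "ev (-6, [LA, LC, LA, LC, LA, LC, LA, LC]) \<in> U"
proof -
  have "ev (mulnf (mulnf (npw xnf Xnf (0)) (-2, [])) (npw xnf Xnf (4))) \<in> U" by (rule dc_nf[OF bimodU uf35])
  then show ?thesis by (simp add: nfs)
qed

lemma tgt_ev: "ev (mulnf (mulnf ynf (npw xnf Xnf i)) hh) = s2 * zpw s1 t1 i * ev hh"
  by (simp add: ev_mulnf ev_npw ev_xnf ev_Xnf ev_ynf)

lemma win1:
  assumes "s2 * zpw s1 t1 t * h \<in> V" "s2 * zpw s1 t1 (t + 1) * h \<in> V"
    "s2 * zpw s1 t1 (t + 2) * h \<in> V" "s2 * zpw s1 t1 (t + 3) * h \<in> V"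
  shows "s2 * s1 ^ n * h \<in> V"
  using window[OF smV q1 i1 i1' assms, of "int n"] by (simp add: zpw_def)

lemma win2:
  assumes "P * zpw s2 t2 t \<in> V" "P * zpw s2 t2 (t + 1) \<in> V"
    "P * zpw s2 t2 (t + 2) \<in> V" "P * zpw s2 t2 (t + 3) \<in> V"
  shows "P * zpw s2 t2 k \<in> V"
  using window[OF smV q2 i2 i2', of P t 1 k] assms by simp

lemma c1: "s2 * s1 ^ n * (s2 * t1 * s2) \<in> V"
proof -
  have hw: "wv [Gy, GX, Gy] = s2 * t1 * s2" by (simp add: mult.assoc power2_eq_square)
  have f0: "s2 * zpw s1 t1 (-1) * wv [Gy, GX, Gy] \<in> V"
  proof -
    have "ev (mulnf (mulnf ynf (npw xnf Xnf (-1))) (wnf [Gy, GX, Gy])) \<in> V" by (simp add: nfs vf56)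
    then show ?thesis by (simp only: tgt_ev ev_wnf)
  qed
  have f1: "s2 * zpw s1 t1 (0) * wv [Gy, GX, Gy] \<in> V"
  proof -
    have "ev (mulnf (mulnf ynf (npw xnf Xnf (0))) (wnf [Gy, GX, Gy])) \<in> V" by (simp add: nfs vf61)
    then show ?thesis by (simp only: tgt_ev ev_wnf)
  qed
  have f2: "s2 * zpw s1 t1 (1) * wv [Gy, GX, Gy] \<in> V"
  proof -
    have "ev (mulnf (mulnf ynf (npw xnf Xnf (1))) (wnf [Gy, GX, Gy])) \<in> V" by (simp add: nfs vf62)
    then show ?thesis by (simp only: tgt_ev ev_wnf)
  qed
  have f3: "s2 * zpw s1 t1 (2) * wv [Gy, GX, Gy] \<in> V"
  proof -
    have "ev (mulnf (mulnf ynf (npw xnf Xnf (2))) (wnf [Gy, GX, Gy])) \<in> V" by (simp add: nfs vf68)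
    then show ?thesis by (simp only: tgt_ev ev_wnf)
  qed
  have "s2 * s1 ^ n * wv [Gy, GX, Gy] \<in> V" by (rule win1[of "-1"]) (use f0 f1 f2 f3 in simp_all)
  then show ?thesis by (simp only: hw)
qed

lemma c2: "s2 * s1 ^ n * (t2 * s1 * t2) \<in> V"
proof -
  have hw: "wv [GY, Gx, GY] = t2 * s1 * t2" by (simp add: mult.assoc power2_eq_square)
  have f0: "s2 * zpw s1 t1 (-1) * wv [GY, Gx, GY] \<in> V"
  proof -
    have "ev (mulnf (mulnf ynf (npw xnf Xnf (-1))) (wnf [GY, Gx, GY])) \<in> V" by (simp add: nfs vf69)
    then show ?thesis by (simp only: tgt_ev ev_wnf)
  qed
  have f1: "s2 * zpw s1 t1 (0) * wv [GY, Gx, GY] \<in> V"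
  proof -
    have "ev (mulnf (mulnf ynf (npw xnf Xnf (0))) (wnf [GY, Gx, GY])) \<in> V" by (simp add: nfs vf70)
    then show ?thesis by (simp only: tgt_ev ev_wnf)
  qed
  have f2: "s2 * zpw s1 t1 (1) * wv [GY, Gx, GY] \<in> V"
  proof -
    have "ev (mulnf (mulnf ynf (npw xnf Xnf (1))) (wnf [GY, Gx, GY])) \<in> V" by (simp add: nfs vf71)
    then show ?thesis by (simp only: tgt_ev ev_wnf)
  qed
  have f3: "s2 * zpw s1 t1 (2) * wv [GY, Gx, GY] \<in> V"
  proof -
    have "ev (mulnf (mulnf ynf (npw xnf Xnf (2))) (wnf [GY, Gx, GY])) \<in> V" by (simp add: nfs vf76)
    then show ?thesis by (simp only: tgt_ev ev_wnf)
  qed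
  have "s2 * s1 ^ n * wv [GY, Gx, GY] \<in> V" by (rule win1[of "-1"]) (use f0 f1 f2 f3 in simp_all)
  then show ?thesis by (simp only: hw)
qed

lemma c3: "s2 * s1 ^ n * (om) \<in> V"
proof -
  have hw: "wv [Gy, Gx, Gx, Gy] = om" by (simp add: mult.assoc power2_eq_square)
  have f0: "s2 * zpw s1 t1 (-1) * wv [Gy, Gx, Gx, Gy] \<in> V"
  proof -
    have "ev (mulnf (mulnf ynf (npw xnf Xnf (-1))) (wnf [Gy, Gx, Gx, Gy])) \<in> V" by (simp add: nfs vf92)
    then show ?thesis by (simp only: tgt_ev ev_wnf)
  qed
  have f1: "s2 * zpw s1 t1 (0) * wv [Gy, Gx, Gx, Gy] \<in> V"
  proof -
    have "ev (mulnf (mulnf ynf (npw xnf Xnf (0))) (wnf [Gy, Gx, Gx, Gy])) \<in> V" by (simp add: nfs vf93)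
    then show ?thesis by (simp only: tgt_ev ev_wnf)
  qed
  have f2: "s2 * zpw s1 t1 (1) * wv [Gy, Gx, Gx, Gy] \<in> V"
  proof -
    have "ev (mulnf (mulnf ynf (npw xnf Xnf (1))) (wnf [Gy, Gx, Gx, Gy])) \<in> V" by (simp add: nfs vf94)
    then show ?thesis by (simp only: tgt_ev ev_wnf)
  qed
  have f3: "s2 * zpw s1 t1 (2) * wv [Gy, Gx, Gx, Gy] \<in> V"
  proof -
    have "ev (mulnf (mulnf ynf (npw xnf Xnf (2))) (wnf [Gy, Gx, Gx, Gy])) \<in> V" by (simp add: nfs vf95)
    then show ?thesis by (simp only: tgt_ev ev_wnf)
  qed
  have "s2 * s1 ^ n * wv [Gy, Gx, Gx, Gy] \<in> V" by (rule win1[of "-1"]) (use f0 f1 f2 f3 in simp_all)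
  then show ?thesis by (simp only: hw)
qed

lemma c4: "s2 * s1 ^ n * (omi) \<in> V"
proof -
  have hw: "wv [GY, GX, GX, GY] = omi" by (simp add: mult.assoc power2_eq_square)
  have f0: "s2 * zpw s1 t1 (-1) * wv [GY, GX, GX, GY] \<in> V"
  proof -
    have "ev (mulnf (mulnf ynf (npw xnf Xnf (-1))) (wnf [GY, GX, GX, GY])) \<in> V" by (simp add: nfs vf96)
    then show ?thesis by (simp only: tgt_ev ev_wnf)
  qed
  have f1: "s2 * zpw s1 t1 (0) * wv [GY, GX, GX, GY] \<in> V"
  proof -
    have "ev (mulnf (mulnf ynf (npw xnf Xnf (0))) (wnf [GY, GX, GX, GY])) \<in> V" by (simp add: nfs vf97)
    then show ?thesis by (simp only: tgt_ev ev_wnf)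
  qed
  have f2: "s2 * zpw s1 t1 (1) * wv [GY, GX, GX, GY] \<in> V"
  proof -
    have "ev (mulnf (mulnf ynf (npw xnf Xnf (1))) (wnf [GY, GX, GX, GY])) \<in> V" by (simp add: nfs vf98)
    then show ?thesis by (simp only: tgt_ev ev_wnf)
  qed
  have f3: "s2 * zpw s1 t1 (2) * wv [GY, GX, GX, GY] \<in> V"
  proof -
    have "ev (mulnf (mulnf ynf (npw xnf Xnf (2))) (wnf [GY, GX, GX, GY])) \<in> V" by (simp add: nfs vf99)
    then show ?thesis by (simp only: tgt_ev ev_wnf)
  qed
  have "s2 * s1 ^ n * wv [GY, GX, GX, GY] \<in> V" by (rule win1[of "-1"]) (use f0 f1 f2 f3 in simp_all)
  then show ?thesis by (simp only: hw)
qed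

lemma c5: "s2 * s1 ^ n * (omi ^ 2) \<in> V"
proof -
  have hw: "wv [GY, GX, GX, GY, GY, GX, GX, GY] = omi ^ 2" by (simp add: mult.assoc power2_eq_square)
  have f0: "s2 * zpw s1 t1 (-2) * wv [GY, GX, GX, GY, GY, GX, GX, GY] \<in> V"
  proof -
    have "ev (mulnf (mulnf ynf (npw xnf Xnf (-2))) (wnf [GY, GX, GX, GY, GY, GX, GX, GY])) \<in> V" by (simp add: nfs vf40)
    then show ?thesis by (simp only: tgt_ev ev_wnf)
  qed
  have f1: "s2 * zpw s1 t1 (-1) * wv [GY, GX, GX, GY, GY, GX, GX, GY] \<in> V"
  proof -
    have "ev (mulnf (mulnf ynf (npw xnf Xnf (-1))) (wnf [GY, GX, GX, GY, GY, GX, GX, GY])) \<in> V" by (simp add: nfs vf100)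
    then show ?thesis by (simp only: tgt_ev ev_wnf)
  qed
  have f2: "s2 * zpw s1 t1 (0) * wv [GY, GX, GX, GY, GY, GX, GX, GY] \<in> V"
  proof -
    have "ev (mulnf (mulnf ynf (npw xnf Xnf (0))) (wnf [GY, GX, GX, GY, GY, GX, GX, GY])) \<in> V" by (simp add: nfs vf101)
    then show ?thesis by (simp only: tgt_ev ev_wnf)
  qed
  have f3: "s2 * zpw s1 t1 (1) * wv [GY, GX, GX, GY, GY, GX, GX, GY] \<in> V"
  proof -
    have "ev (mulnf (mulnf ynf (npw xnf Xnf (1))) (wnf [GY, GX, GX, GY, GY, GX, GX, GY])) \<in> V" by (simp add: nfs vf102)
    then show ?thesis by (simp only: tgt_ev ev_wnf)
  qed
  have "s2 * s1 ^ n * wv [GY, GX, GX, GY, GY, GX, GX, GY] \<in> V" by (rule win1[of "-2"]) (use f0 f1 f2 f3 in simp_all)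
  then show ?thesis by (simp only: hw)
qed

lemma c0: "s2 * s1 ^ n * s2 ^ k \<in> V"
proof -
  have f_0_0: "s2 * zpw s1 t1 (-1) * zpw s2 t2 (-2) \<in> V"
  proof -
    have "ev (mulnf (mulnf ynf (npw xnf Xnf (-1))) (npw ynf Ynf (-2))) \<in> V" by (simp add: nfs vf103)
    then show ?thesis by (simp only: tgt_ev ev_npw ev_ynf ev_Ynf)
  qed
  have f_0_1: "s2 * zpw s1 t1 (-1) * zpw s2 t2 (-1) \<in> V"
  proof -
    have "ev (mulnf (mulnf ynf (npw xnf Xnf (-1))) (npw ynf Ynf (-1))) \<in> V" by (simp add: nfs vf104)
    then show ?thesis by (simp only: tgt_ev ev_npw ev_ynf ev_Ynf)
  qed
  have f_0_2: "s2 * zpw s1 t1 (-1) * zpw s2 t2 (0) \<in> V"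
  proof -
    have "ev (mulnf (mulnf ynf (npw xnf Xnf (-1))) (npw ynf Ynf (0))) \<in> V" by (simp add: nfs vf105)
    then show ?thesis by (simp only: tgt_ev ev_npw ev_ynf ev_Ynf)
  qed
  have f_0_3: "s2 * zpw s1 t1 (-1) * zpw s2 t2 (1) \<in> V"
  proof -
    have "ev (mulnf (mulnf ynf (npw xnf Xnf (-1))) (npw ynf Ynf (1))) \<in> V" by (simp add: nfs vf21)
    then show ?thesis by (simp only: tgt_ev ev_npw ev_ynf ev_Ynf)
  qed
  have f_1_0: "s2 * zpw s1 t1 (0) * zpw s2 t2 (-2) \<in> V"
  proof -
    have "ev (mulnf (mulnf ynf (npw xnf Xnf (0))) (npw ynf Ynf (-2))) \<in> V" by (simp add: nfs vf4)
    then show ?thesis by (simp only: tgt_ev ev_npw ev_ynf ev_Ynf)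
  qed
  have f_1_1: "s2 * zpw s1 t1 (0) * zpw s2 t2 (-1) \<in> V"
  proof -
    have "ev (mulnf (mulnf ynf (npw xnf Xnf (0))) (npw ynf Ynf (-1))) \<in> V" by (simp add: nfs vf45)
    then show ?thesis by (simp only: tgt_ev ev_npw ev_ynf ev_Ynf)
  qed
  have f_1_2: "s2 * zpw s1 t1 (0) * zpw s2 t2 (0) \<in> V"
  proof -
    have "ev (mulnf (mulnf ynf (npw xnf Xnf (0))) (npw ynf Ynf (0))) \<in> V" by (simp add: nfs vf19)
    then show ?thesis by (simp only: tgt_ev ev_npw ev_ynf ev_Ynf)
  qed
  have f_1_3: "s2 * zpw s1 t1 (0) * zpw s2 t2 (1) \<in> V"
  proof -
    have "ev (mulnf (mulnf ynf (npw xnf Xnf (0))) (npw ynf Ynf (1))) \<in> V" by (simp add: nfs vf48)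
    then show ?thesis by (simp only: tgt_ev ev_npw ev_ynf ev_Ynf)
  qed
  have f_2_0: "s2 * zpw s1 t1 (1) * zpw s2 t2 (-2) \<in> V"
  proof -
    have "ev (mulnf (mulnf ynf (npw xnf Xnf (1))) (npw ynf Ynf (-2))) \<in> V" by (simp add: nfs vf50)
    then show ?thesis by (simp only: tgt_ev ev_npw ev_ynf ev_Ynf)
  qed
  have f_2_1: "s2 * zpw s1 t1 (1) * zpw s2 t2 (-1) \<in> V"
  proof -
    have "ev (mulnf (mulnf ynf (npw xnf Xnf (1))) (npw ynf Ynf (-1))) \<in> V" by (simp add: nfs vf106)
    then show ?thesis by (simp only: tgt_ev ev_npw ev_ynf ev_Ynf)
  qed
  have f_2_2: "s2 * zpw s1 t1 (1) * zpw s2 t2 (0) \<in> V"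
  proof -
    have "ev (mulnf (mulnf ynf (npw xnf Xnf (1))) (npw ynf Ynf (0))) \<in> V" by (simp add: nfs vf107)
    then show ?thesis by (simp only: tgt_ev ev_npw ev_ynf ev_Ynf)
  qed
  have f_2_3: "s2 * zpw s1 t1 (1) * zpw s2 t2 (1) \<in> V"
  proof -
    have "ev (mulnf (mulnf ynf (npw xnf Xnf (1))) (npw ynf Ynf (1))) \<in> V" by (simp add: nfs vf108)
    then show ?thesis by (simp only: tgt_ev ev_npw ev_ynf ev_Ynf)
  qed
  have f_3_0: "s2 * zpw s1 t1 (2) * zpw s2 t2 (-2) \<in> V"
  proof -
    have "ev (mulnf (mulnf ynf (npw xnf Xnf (2))) (npw ynf Ynf (-2))) \<in> V" by (simp add: nfs vf109)
    then show ?thesis by (simp only: tgt_ev ev_npw ev_ynf ev_Ynf)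
  qed
  have f_3_1: "s2 * zpw s1 t1 (2) * zpw s2 t2 (-1) \<in> V"
  proof -
    have "ev (mulnf (mulnf ynf (npw xnf Xnf (2))) (npw ynf Ynf (-1))) \<in> V" by (simp add: nfs vf110)
    then show ?thesis by (simp only: tgt_ev ev_npw ev_ynf ev_Ynf)
  qed
  have f_3_2: "s2 * zpw s1 t1 (2) * zpw s2 t2 (0) \<in> V"
  proof -
    have "ev (mulnf (mulnf ynf (npw xnf Xnf (2))) (npw ynf Ynf (0))) \<in> V" by (simp add: nfs vf111)
    then show ?thesis by (simp only: tgt_ev ev_npw ev_ynf ev_Ynf)
  qed
  have f_3_3: "s2 * zpw s1 t1 (2) * zpw s2 t2 (1) \<in> V"
  proof -
    have "ev (mulnf (mulnf ynf (npw xnf Xnf (2))) (npw ynf Ynf (1))) \<in> V" by (simp add: nfs vf51)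
    then show ?thesis by (simp only: tgt_ev ev_npw ev_ynf ev_Ynf)
  qed
  have g0: "s2 * zpw s1 t1 (-1) * zpw s2 t2 k2 \<in> V" for k2 by (rule win2[of _ "-2"]) (use f_0_0 f_0_1 f_0_2 f_0_3 in simp_all)
  have g1: "s2 * zpw s1 t1 (0) * zpw s2 t2 k2 \<in> V" for k2 by (rule win2[of _ "-2"]) (use f_1_0 f_1_1 f_1_2 f_1_3 in simp_all)
  have g2: "s2 * zpw s1 t1 (1) * zpw s2 t2 k2 \<in> V" for k2 by (rule win2[of _ "-2"]) (use f_2_0 f_2_1 f_2_2 f_2_3 in simp_all)
  have g3: "s2 * zpw s1 t1 (2) * zpw s2 t2 k2 \<in> V" for k2 by (rule win2[of _ "-2"]) (use f_3_0 f_3_1 f_3_2 f_3_3 in simp_all)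
  have "s2 * s1 ^ n * zpw s2 t2 (int k) \<in> V" by (rule win1[of "-1"]) (use g0 g1 g2 g3 in simp_all)
  then show ?thesis by (simp add: zpw_def)
qed

lemma U_om: "om \<in> U"
proof -
  have "ev (wnf [Gy, Gx, Gx, Gy]) \<in> U" by (simp add: nfs uf9)
  then have "wv [Gy, Gx, Gx, Gy] \<in> U" by (simp only: ev_wnf)
  then show ?thesis by (simp add: mult.assoc power2_eq_square)
qed

lemma U_omi2: "omi ^ 2 \<in> U"
proof -
  have "ev (wnf [GY, GX, GX, GY, GY, GX, GX, GY]) \<in> U" by (simp add: nfs uf36)
  then have "wv [GY, GX, GX, GY, GY, GX, GX, GY] \<in> U" by (simp only: ev_wnf)
  then show ?thesis by (simp add: mult.assoc power2_eq_square)
qed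

lemma main2: "U = V \<and> Hs = U" by (rule main[OF c0 c1 c2 c3 c4 c5 U_om U_omi2])
end 
theorem theorem3p3:
  fixes a b c d e s1 s2 t1 t2 :: "'a::ring_1"
  assumes central: "\<And>x. a * x = x * a" "\<And>x. b * x = x * b"
                   "\<And>x. c * x = x * c" "\<And>x. d * x = x * d"
    and dinv: "d * e = 1" "e * d = 1"
    and inv1: "s1 * t1 = 1" "t1 * s1 = 1"
    and inv2: "s2 * t2 = 1" "t2 * s2 = 1"
    and braid: "s1 * s2 * s1 = s2 * s1 * s2"
    and quart1: "s1 ^ 4 = a * s1 ^ 3 + b * s1 ^ 2 + c * s1 + d"
    and quart2: "s2 ^ 4 = a * s2 ^ 3 + b * s2 ^ 2 + c * s2 + d"
  shows "Ufull (scal a b c d e) s1 s2 t1 t2 =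
            mprod3 (scal a b c d e) (usub (scal a b c d e) s1) (usub (scal a b c d e) s2)
                   (usub (scal a b c d e) s1)
         \<oplus>\<^sub>m mprod3 (scal a b c d e) (usub (scal a b c d e) s1) {s2 * t1 * s2}
                   (usub (scal a b c d e) s1)
         \<oplus>\<^sub>m mprod3 (scal a b c d e) (usub (scal a b c d e) s1) {t2 * s1 * t2}
                   (usub (scal a b c d e) s1)
         \<oplus>\<^sub>m mprod2 (scal a b c d e) (usub (scal a b c d e) s1) {s2 * s1 ^ 2 * s2}
         \<oplus>\<^sub>m mprod2 (scal a b c d e) (usub (scal a b c d e) s1) {t2 * t1 ^ 2 * t2}
         \<oplus>\<^sub>m mprod2 (scal a b c d e) (usub (scal a b c d e) s1) {(t2 * t1 ^ 2 * t2) ^ 2}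
       \<and> lspan (scal a b c d e) (words {s1, s2, t1, t2}) = Ufull (scal a b c d e) s1 s2 t1 t2"
  proof -
  interpret H: H4 a b c d e s1 s2 t1 t2
    by unfold_locales (fact central dinv inv1 inv2 braid quart1 quart2)+
  have m: "H.U = H.V \<and> H.Hs = H.U" by (rule H.main2)
  have e1: "Ufull (scal a b c d e) s1 s2 t1 t2 = H.V" using m H.U_eq by simp
  have e2: "lspan (scal a b c d e) (words {s1, s2, t1, t2}) = Ufull (scal a b c d e) s1 s2 t1 t2"
    using m H.U_eq by simp
  show ?thesis using e1 e2
    unfolding H.V_def H.P0_def H.P1_def H.P2_def H.P3_def H.P4_def H.P5_def by (intro conjI)
qed

end
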